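(* For every integer $d\geq 5$, the curve $C: f=xyz(x^{d-3}+y^{d-3}+z^{d-3})=0$ in $\mathbb{P}^2$ is of type $(d,d-2,3)$, satisfies $\Delta m:=(2r-d+3)-m=d-4$ (with $r=d-2$, $m=3$), and has total Tjurina number $\tau(C)=3(d-2)$.
   Context: Let $S=\mathbb{C}[x,y,z]$. For a reduced homogeneous $f\in S$ of degree $d$, let $D_0(f)=\{(a,b,c)\in S^3: af_x+bf_y+cf_z=0\}$ be the graded $S$-module of Jacobian syzygies. The curve $C:f=0$ is of type $(d,r,m)$ if $D_0(f)$ is minimally generated by $m$ homogeneous elements, all of degree $r$. The total Tjurina number $\tau(C)$ is the degree of the Jacobian ideal $(f_x,f_y,f_z)$, i.e. the sum of the Tjurina numbers of the singular points of $C$. *)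

theory Defs
  imports Complex_Main "HOL-Library.Poly_Mapping" "HOL-Library.Product_Plus"
begin

text \<open>The polynomial ring S = C[x,y,z]: finitely supported maps from exponent
triples (i,j,k) (standing for the monomial x^i y^j z^k) to complex coefficients,
with the convolution product of HOL-Library.Poly_Mapping.\<close>

type_synonym mono3 = "nat \<times> nat \<times> nat"
type_synonym mpoly3 = "mono3 \<Rightarrow>\<^sub>0 complex"

definition mono_deg :: "mono3 \<Rightarrow> nat" where
  "mono_deg m = fst m + fst (snd m) + snd (snd m)"

definition const3 :: "complex \<Rightarrow> mpoly3" where
  "const3 c = Poly_Mapping.single (0,0,0) c"

definition varX :: mpoly3 where "varX = Poly_Mapping.single (1,0,0) 1"
definition varY :: mpoly3 where "varY = Poly_Mapping.single (0,1,0) 1"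
definition varZ :: mpoly3 where "varZ = Poly_Mapping.single (0,0,1) 1"

text \<open>Homogeneous of degree k (the zero polynomial is homogeneous of every degree).\<close>
definition homogeneous :: "nat \<Rightarrow> mpoly3 \<Rightarrow> bool" where
  "homogeneous k p \<longleftrightarrow> (\<forall>m\<in>Poly_Mapping.keys p. mono_deg m = k)"

definition pdX :: "mpoly3 \<Rightarrow> mpoly3" where
  "pdX p = (\<Sum>m\<in>Poly_Mapping.keys p. case m of (i,j,k) \<Rightarrow>
      Poly_Mapping.single (i - 1, j, k) (of_nat i * Poly_Mapping.lookup p m))"
definition pdY :: "mpoly3 \<Rightarrow> mpoly3" where
  "pdY p = (\<Sum>m\<in>Poly_Mapping.keys p. case m of (i,j,k) \<Rightarrow>
      Poly_Mapping.single (i, j - 1, k) (of_nat j * Poly_Mapping.lookup p m))"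
definition pdZ :: "mpoly3 \<Rightarrow> mpoly3" where
  "pdZ p = (\<Sum>m\<in>Poly_Mapping.keys p. case m of (i,j,k) \<Rightarrow>
      Poly_Mapping.single (i, j, k - 1) (of_nat k * Poly_Mapping.lookup p m))"

definition reduced3 :: "mpoly3 \<Rightarrow> bool" where
  "reduced3 f \<longleftrightarrow> f \<noteq> 0 \<and> (\<forall>g. g * g dvd f \<longrightarrow> Poly_Mapping.keys g \<subseteq> {(0,0,0)})"

definition D0 :: "mpoly3 \<Rightarrow> (mpoly3 \<times> mpoly3 \<times> mpoly3) set" where
  "D0 f = {(a,b,c). a * pdX f + b * pdY f + c * pdZ f = 0}"

definition smult3 :: "mpoly3 \<Rightarrow> mpoly3 \<times> mpoly3 \<times> mpoly3 \<Rightarrow> mpoly3 \<times> mpoly3 \<times> mpoly3" where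
  "smult3 s v = (case v of (a,b,c) \<Rightarrow> (s*a, s*b, s*c))"

definition gen_module3 :: "(mpoly3 \<times> mpoly3 \<times> mpoly3) list \<Rightarrow> (mpoly3 \<times> mpoly3 \<times> mpoly3) set" where
  "gen_module3 G = {(\<Sum>i<length G. smult3 (s i) (G ! i)) | s. True}"

definition homogeneous3 :: "nat \<Rightarrow> mpoly3 \<times> mpoly3 \<times> mpoly3 \<Rightarrow> bool" where
  "homogeneous3 r v \<longleftrightarrow> (case v of (a,b,c) \<Rightarrow> homogeneous r a \<and> homogeneous r b \<and> homogeneous r c)"

definition curve_type :: "mpoly3 \<Rightarrow> nat \<Rightarrow> nat \<Rightarrow> nat \<Rightarrow> bool" where
  "curve_type f d r m \<longleftrightarrow> homogeneous d f \<and> reduced3 f \<and>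
     (\<exists>G. length G = m \<and> (\<forall>g\<in>set G. homogeneous3 r g \<and> g \<noteq> 0) \<and> gen_module3 G = D0 f) \<and>
     (\<forall>G. gen_module3 G = D0 f \<longrightarrow> m \<le> length G)"

text \<open>Jacobian ideal and its degree (the eventual value of the Hilbert function of S/J).\<close>
definition jacobian_ideal :: "mpoly3 \<Rightarrow> mpoly3 set" where
  "jacobian_ideal f = {a * pdX f + b * pdY f + c * pdZ f | a b c. True}"

definition cscale :: "complex \<Rightarrow> mpoly3 \<Rightarrow> mpoly3" where
  "cscale c p = const3 c * p"

definition S_deg :: "nat \<Rightarrow> mpoly3 set" where
  "S_deg k = {p. homogeneous k p}"

definition hilbert_quot :: "mpoly3 set \<Rightarrow> nat \<Rightarrow> nat" where
  "hilbert_quot J k = vector_space.dim cscale (S_deg k) - vector_space.dim cscale (J \<inter> S_deg k)"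

definition total_tjurina :: "mpoly3 \<Rightarrow> nat" where
  "total_tjurina f = (THE t. \<forall>\<^sub>F k in sequentially. hilbert_quot (jacobian_ideal f) k = t)"

definition fermat_xyz :: "nat \<Rightarrow> mpoly3" where
  "fermat_xyz d = varX * varY * varZ * (varX ^ (d - 3) + varY ^ (d - 3) + varZ ^ (d - 3))"

end

theory Submission
  imports Defs "HOL-Library.Product_Lexorder"
begin


instance prod :: (ordered_cancel_comm_monoid_add, ordered_cancel_comm_monoid_add) ordered_cancel_comm_monoid_add
proof
  fix a b c :: "'a \<times> 'b"
  assume "a \<le> b"
  then show "c + a \<le> c + b"
    by (cases a; cases b; cases c) (auto simp: add_strict_left_mono add_left_mono)
qed

section \<open>Monomials\<close>

definition mon :: "nat \<Rightarrow> nat \<Rightarrow> nat \<Rightarrow> mpoly3" where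
  "mon i j k = Poly_Mapping.single (i,j,k) 1"

lemma mon_mult: "mon a b c * mon a' b' c' = mon (a+a') (b+b') (c+c')"
  by (simp add: mon_def mult_single)

lemma mon_0: "mon 0 0 0 = 1"
  by (simp add: mon_def zero_prod_def[symmetric])

lemma varX_pow: "varX ^ a = mon a 0 0"
  by (induction a) (auto simp: mon_0 varX_def mon_def[symmetric] mon_mult mult.commute)
lemma varY_pow: "varY ^ a = mon 0 a 0"
  by (induction a) (auto simp: mon_0 varY_def mon_def[symmetric] mon_mult mult.commute)
lemma varZ_pow: "varZ ^ a = mon 0 0 a"
  by (induction a) (auto simp: mon_0 varZ_def mon_def[symmetric] mon_mult mult.commute)

lemma fermat_expand:
  assumes "d \<ge> 3"
  shows "fermat_xyz d = mon (d-2) 1 1 + mon 1 (d-2) 1 + mon 1 1 (d-2)"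
proof -
  have "varX * varY * varZ = mon 1 1 1"
    by (simp add: varX_def varY_def varZ_def mon_def[symmetric] mon_mult)
  moreover have "Suc (d-3) = d-2" using assms by arith
  ultimately show ?thesis using assms
    by (simp add: fermat_xyz_def varX_pow varY_pow varZ_pow distrib_left mon_mult numeral_2_eq_2 Suc_diff_Suc)
qed

lemma poly_sum_single: "p = (\<Sum>a\<in>Poly_Mapping.keys p. Poly_Mapping.single a (Poly_Mapping.lookup p a))"
proof (rule poly_mapping_eqI)
  fix k
  show "Poly_Mapping.lookup p k = Poly_Mapping.lookup (\<Sum>a\<in>Poly_Mapping.keys p. Poly_Mapping.single a (Poly_Mapping.lookup p a)) k"
    by (simp add: lookup_sum lookup_single when_def in_keys_iff)
qed

lemma poly_induct [case_names zero single add]: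
  fixes P :: "('a \<Rightarrow>\<^sub>0 'b::comm_monoid_add) \<Rightarrow> bool"
  assumes "P 0" "\<And>a c. P (Poly_Mapping.single a c)" "\<And>p q. P p \<Longrightarrow> P q \<Longrightarrow> P (p + q)"
  shows "P p"
proof -
  have "P (\<Sum>a\<in>A. Poly_Mapping.single a (Poly_Mapping.lookup p a))" if "finite A" for A
    using that by (induction A rule: finite_induct) (auto intro: assms)
  then show ?thesis by (subst poly_sum_single) simp
qed

section \<open>Derivatives\<close>

lemma pdX_superset:
  assumes "finite K" "Poly_Mapping.keys p \<subseteq> K"
  shows "pdX p = (\<Sum>m\<in>K. case m of (i,j,k) \<Rightarrow>
      Poly_Mapping.single (i - 1, j, k) (of_nat i * Poly_Mapping.lookup p m))"
  unfolding pdX_def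
  by (rule sum.mono_neutral_left[OF assms]) (auto simp: in_keys_iff)
lemma pdY_superset:
  assumes "finite K" "Poly_Mapping.keys p \<subseteq> K"
  shows "pdY p = (\<Sum>m\<in>K. case m of (i,j,k) \<Rightarrow>
      Poly_Mapping.single (i, j - 1, k) (of_nat j * Poly_Mapping.lookup p m))"
  unfolding pdY_def
  by (rule sum.mono_neutral_left[OF assms]) (auto simp: in_keys_iff)
lemma pdZ_superset:
  assumes "finite K" "Poly_Mapping.keys p \<subseteq> K"
  shows "pdZ p = (\<Sum>m\<in>K. case m of (i,j,k) \<Rightarrow>
      Poly_Mapping.single (i, j, k - 1) (of_nat k * Poly_Mapping.lookup p m))"
  unfolding pdZ_def
  by (rule sum.mono_neutral_left[OF assms]) (auto simp: in_keys_iff)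

lemma pdX_add: "pdX (p + q) = pdX p + pdX q"
proof -
  let ?K = "Poly_Mapping.keys p \<union> Poly_Mapping.keys q"
  have k: "Poly_Mapping.keys (p+q) \<subseteq> ?K" by (rule keys_add)
  show ?thesis
    unfolding pdX_superset[OF _ k, simplified] pdX_superset[of ?K p, simplified]
      pdX_superset[of ?K q, simplified] sum.distrib[symmetric]
    by (rule sum.cong) (auto simp: lookup_add distrib_left single_add)
qed
lemma pdY_add: "pdY (p + q) = pdY p + pdY q"
proof -
  let ?K = "Poly_Mapping.keys p \<union> Poly_Mapping.keys q"
  have k: "Poly_Mapping.keys (p+q) \<subseteq> ?K" by (rule keys_add)
  show ?thesis
    unfolding pdY_superset[OF _ k, simplified] pdY_superset[of ?K p, simplified]
      pdY_superset[of ?K q, simplified] sum.distrib[symmetric]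
    by (rule sum.cong) (auto simp: lookup_add distrib_left single_add)
qed
lemma pdZ_add: "pdZ (p + q) = pdZ p + pdZ q"
proof -
  let ?K = "Poly_Mapping.keys p \<union> Poly_Mapping.keys q"
  have k: "Poly_Mapping.keys (p+q) \<subseteq> ?K" by (rule keys_add)
  show ?thesis
    unfolding pdZ_superset[OF _ k, simplified] pdZ_superset[of ?K p, simplified]
      pdZ_superset[of ?K q, simplified] sum.distrib[symmetric]
    by (rule sum.cong) (auto simp: lookup_add distrib_left single_add)
qed

lemma pdX_single: "pdX (Poly_Mapping.single (i,j,k) c) = Poly_Mapping.single (i-1,j,k) (of_nat i * c)"
  by (subst pdX_superset[of "{(i,j,k)}"]) auto
lemma pdY_single: "pdY (Poly_Mapping.single (i,j,k) c) = Poly_Mapping.single (i,j-1,k) (of_nat j * c)"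
  by (subst pdY_superset[of "{(i,j,k)}"]) auto
lemma pdZ_single: "pdZ (Poly_Mapping.single (i,j,k) c) = Poly_Mapping.single (i,j,k-1) (of_nat k * c)"
  by (subst pdZ_superset[of "{(i,j,k)}"]) auto

lemma pdX_0[simp]: "pdX 0 = 0" by (simp add: pdX_def)
lemma pdY_0[simp]: "pdY 0 = 0" by (simp add: pdY_def)
lemma pdZ_0[simp]: "pdZ 0 = 0" by (simp add: pdZ_def)

lemma pdX_mult_single:
  "pdX (Poly_Mapping.single a c * Poly_Mapping.single b e) =
     pdX (Poly_Mapping.single a c) * Poly_Mapping.single b e + Poly_Mapping.single a c * pdX (Poly_Mapping.single b e)"
proof -
  obtain i j k where a: "a = (i,j,k)" by (cases a) auto
  obtain i' j' k' where b: "b = (i',j',k')" by (cases b) auto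
  show ?thesis
    by (cases "i = 0"; cases "i' = 0")
      (auto simp: a b mult_single pdX_single single_add[symmetric] algebra_simps)
qed
lemma pdY_mult_single:
  "pdY (Poly_Mapping.single a c * Poly_Mapping.single b e) =
     pdY (Poly_Mapping.single a c) * Poly_Mapping.single b e + Poly_Mapping.single a c * pdY (Poly_Mapping.single b e)"
proof -
  obtain i j k where a: "a = (i,j,k)" by (cases a) auto
  obtain i' j' k' where b: "b = (i',j',k')" by (cases b) auto
  show ?thesis
    by (cases "j = 0"; cases "j' = 0")
      (auto simp: a b mult_single pdY_single single_add[symmetric] algebra_simps)
qed
lemma pdZ_mult_single:
  "pdZ (Poly_Mapping.single a c * Poly_Mapping.single b e) =
     pdZ (Poly_Mapping.single a c) * Poly_Mapping.single b e + Poly_Mapping.single a c * pdZ (Poly_Mapping.single b e)"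
proof -
  obtain i j k where a: "a = (i,j,k)" by (cases a) auto
  obtain i' j' k' where b: "b = (i',j',k')" by (cases b) auto
  show ?thesis
    by (cases "k = 0"; cases "k' = 0")
      (auto simp: a b mult_single pdZ_single single_add[symmetric] algebra_simps)
qed

lemma pdX_mult: "pdX (p * q) = pdX p * q + p * pdX q"
proof (induction p arbitrary: q rule: poly_induct)
  case zero then show ?case by simp
next
  case (single a c)
  show ?case
  proof (induction q rule: poly_induct)
    case zero then show ?case by simp
  next
    case (single b e) then show ?case by (rule pdX_mult_single)
  next
    case (add q1 q2) then show ?case unfolding distrib_left pdX_add add.IH by (simp add: algebra_simps)
  qed
next
  case (add p1 p2) then show ?case unfolding distrib_right pdX_add add.IH by (simp add: algebra_simps)
qed
lemma pdY_mult: "pdY (p * q) = pdY p * q + p * pdY q"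
proof (induction p arbitrary: q rule: poly_induct)
  case zero then show ?case by simp
next
  case (single a c)
  show ?case
  proof (induction q rule: poly_induct)
    case zero then show ?case by simp
  next
    case (single b e) then show ?case by (rule pdY_mult_single)
  next
    case (add q1 q2) then show ?case unfolding distrib_left pdY_add add.IH by (simp add: algebra_simps)
  qed
next
  case (add p1 p2) then show ?case unfolding distrib_right pdY_add add.IH by (simp add: algebra_simps)
qed
lemma pdZ_mult: "pdZ (p * q) = pdZ p * q + p * pdZ q"
proof (induction p arbitrary: q rule: poly_induct)
  case zero then show ?case by simp
next
  case (single a c)
  show ?case
  proof (induction q rule: poly_induct)
    case zero then show ?case by simp
  next
    case (single b e) then show ?case by (rule pdZ_mult_single)
  next
    case (add q1 q2) then show ?case unfolding distrib_left pdZ_add add.IH by (simp add: algebra_simps)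
  qed
next
  case (add p1 p2) then show ?case unfolding distrib_right pdZ_add add.IH by (simp add: algebra_simps)
qed


section \<open>Leading and trailing monomials\<close>

lemma keys_single_mult:
  "Poly_Mapping.keys (Poly_Mapping.single m c * h) \<subseteq> {m + k | k. k \<in> Poly_Mapping.keys h}"
  using keys_mult[of "Poly_Mapping.single m c" h] by (auto split: if_splits)

lemma keys_mult': "k \<in> Poly_Mapping.keys (f * g) \<Longrightarrow> \<exists>a b. a \<in> Poly_Mapping.keys f \<and> b \<in> Poly_Mapping.keys g \<and> k = a + b"
  using keys_mult[of f g] by blast

lemma lead_mult:
  fixes g h :: mpoly3
  assumes "g \<noteq> 0" "h \<noteq> 0"
  defines "Mg \<equiv> Max (Poly_Mapping.keys g)" and "Mh \<equiv> Max (Poly_Mapping.keys h)"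
  shows "Poly_Mapping.lookup (g*h) (Mg + Mh) = Poly_Mapping.lookup g Mg * Poly_Mapping.lookup h Mh"
    and "\<And>k. k \<in> Poly_Mapping.keys (g*h) \<Longrightarrow> k \<le> Mg + Mh"
proof -
  have kg: "Poly_Mapping.keys g \<noteq> {}" "Poly_Mapping.keys h \<noteq> {}" using assms by auto
  have leg: "a \<le> Mg" if "a \<in> Poly_Mapping.keys g" for a using that Mg_def by simp
  have leh: "a \<le> Mh" if "a \<in> Poly_Mapping.keys h" for a using that Mh_def by simp
  show "k \<le> Mg + Mh" if "k \<in> Poly_Mapping.keys (g*h)" for k
    using keys_mult'[OF that] leg leh add_mono by blast
  define a where "a = Poly_Mapping.lookup g Mg"
  define b where "b = Poly_Mapping.lookup h Mh"
  define g1 where "g1 = g - Poly_Mapping.single Mg a"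
  define h1 where "h1 = h - Poly_Mapping.single Mh b"
  have kg1: "k < Mg" if "k \<in> Poly_Mapping.keys g1" for k
  proof -
    have "k \<noteq> Mg" using that by (auto simp: g1_def a_def in_keys_iff lookup_minus)
    moreover have "k \<in> Poly_Mapping.keys g" using that
      by (auto simp: g1_def a_def in_keys_iff lookup_minus lookup_single when_def split: if_splits)
    ultimately show ?thesis using leg by (simp add: order_less_le)
  qed
  have kh1: "k < Mh" if "k \<in> Poly_Mapping.keys h1" for k
  proof -
    have "k \<noteq> Mh" using that by (auto simp: h1_def b_def in_keys_iff lookup_minus)
    moreover have "k \<in> Poly_Mapping.keys h" using that
      by (auto simp: h1_def b_def in_keys_iff lookup_minus lookup_single when_def split: if_splits)
    ultimately show ?thesis using leh by (simp add: order_less_le)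
  qed
  have e: "g * h = Poly_Mapping.single (Mg+Mh) (a*b) + Poly_Mapping.single Mg a * h1 + g1 * h"
    by (simp add: g1_def h1_def algebra_simps mult_single)
  have z1: "Poly_Mapping.lookup (Poly_Mapping.single Mg a * h1) (Mg + Mh) = 0"
  proof (rule ccontr)
    assume "Poly_Mapping.lookup (Poly_Mapping.single Mg a * h1) (Mg + Mh) \<noteq> 0"
    then have "Mg + Mh \<in> Poly_Mapping.keys (Poly_Mapping.single Mg a * h1)" by (simp add: in_keys_iff)
    then obtain k where "k \<in> Poly_Mapping.keys h1" "Mg + Mh = Mg + k" using keys_single_mult by blast
    then show False using kh1 by fastforce
  qed
  have z2: "Poly_Mapping.lookup (g1 * h) (Mg + Mh) = 0"
  proof (rule ccontr)
    assume "Poly_Mapping.lookup (g1 * h) (Mg + Mh) \<noteq> 0"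
    then have "Mg + Mh \<in> Poly_Mapping.keys (g1 * h)" by (simp add: in_keys_iff)
    then obtain k l where "k \<in> Poly_Mapping.keys g1" "l \<in> Poly_Mapping.keys h" "Mg + Mh = k + l"
      using keys_mult' by blast
    then show False using kg1 leh add_less_le_mono by (metis less_irrefl)
  qed
  show "Poly_Mapping.lookup (g*h) (Mg + Mh) = Poly_Mapping.lookup g Mg * Poly_Mapping.lookup h Mh"
    unfolding e lookup_add z1 z2 by (simp add: a_def b_def)
qed

lemma trail_mult:
  fixes g h :: mpoly3
  assumes "g \<noteq> 0" "h \<noteq> 0"
  defines "Mg \<equiv> Min (Poly_Mapping.keys g)" and "Mh \<equiv> Min (Poly_Mapping.keys h)"
  shows "Poly_Mapping.lookup (g*h) (Mg + Mh) = Poly_Mapping.lookup g Mg * Poly_Mapping.lookup h Mh"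
    and "\<And>k. k \<in> Poly_Mapping.keys (g*h) \<Longrightarrow> Mg + Mh \<le> k"
proof -
  have kg: "Poly_Mapping.keys g \<noteq> {}" "Poly_Mapping.keys h \<noteq> {}" using assms by auto
  have leg: "Mg \<le> a" if "a \<in> Poly_Mapping.keys g" for a using that Mg_def by simp
  have leh: "Mh \<le> a" if "a \<in> Poly_Mapping.keys h" for a using that Mh_def by simp
  show "Mg + Mh \<le> k" if "k \<in> Poly_Mapping.keys (g*h)" for k
    using keys_mult'[OF that] leg leh add_mono by blast
  define a where "a = Poly_Mapping.lookup g Mg"
  define b where "b = Poly_Mapping.lookup h Mh"
  define g1 where "g1 = g - Poly_Mapping.single Mg a"
  define h1 where "h1 = h - Poly_Mapping.single Mh b"
  have kg1: "Mg < k" if "k \<in> Poly_Mapping.keys g1" for k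
  proof -
    have "k \<noteq> Mg" using that by (auto simp: g1_def a_def in_keys_iff lookup_minus)
    moreover have "k \<in> Poly_Mapping.keys g" using that
      by (auto simp: g1_def a_def in_keys_iff lookup_minus lookup_single when_def split: if_splits)
    ultimately show ?thesis using leg by (simp add: order_less_le)
  qed
  have kh1: "Mh < k" if "k \<in> Poly_Mapping.keys h1" for k
  proof -
    have "k \<noteq> Mh" using that by (auto simp: h1_def b_def in_keys_iff lookup_minus)
    moreover have "k \<in> Poly_Mapping.keys h" using that
      by (auto simp: h1_def b_def in_keys_iff lookup_minus lookup_single when_def split: if_splits)
    ultimately show ?thesis using leh by (simp add: order_less_le)
  qed
  have e: "g * h = Poly_Mapping.single (Mg+Mh) (a*b) + Poly_Mapping.single Mg a * h1 + g1 * h"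
    by (simp add: g1_def h1_def algebra_simps mult_single)
  have z1: "Poly_Mapping.lookup (Poly_Mapping.single Mg a * h1) (Mg + Mh) = 0"
  proof (rule ccontr)
    assume "Poly_Mapping.lookup (Poly_Mapping.single Mg a * h1) (Mg + Mh) \<noteq> 0"
    then have "Mg + Mh \<in> Poly_Mapping.keys (Poly_Mapping.single Mg a * h1)" by (simp add: in_keys_iff)
    then obtain k where "k \<in> Poly_Mapping.keys h1" "Mg + Mh = Mg + k" using keys_single_mult by blast
    then show False using kh1 by fastforce
  qed
  have z2: "Poly_Mapping.lookup (g1 * h) (Mg + Mh) = 0"
  proof (rule ccontr)
    assume "Poly_Mapping.lookup (g1 * h) (Mg + Mh) \<noteq> 0"
    then have "Mg + Mh \<in> Poly_Mapping.keys (g1 * h)" by (simp add: in_keys_iff)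
    then obtain k l where "k \<in> Poly_Mapping.keys g1" "l \<in> Poly_Mapping.keys h" "Mg + Mh = k + l"
      using keys_mult' by blast
    then show False using kg1 leh add_less_le_mono by (metis less_irrefl)
  qed
  show "Poly_Mapping.lookup (g*h) (Mg + Mh) = Poly_Mapping.lookup g Mg * Poly_Mapping.lookup h Mh"
    unfolding e lookup_add z1 z2 by (simp add: a_def b_def)
qed

lemma dvd_single:
  fixes g :: mpoly3
  assumes "g dvd Poly_Mapping.single m c" "c \<noteq> 0"
  shows "\<exists>m' c' m''. g = Poly_Mapping.single m' c' \<and> m = m' + m''"
proof -
  obtain h where gh: "Poly_Mapping.single m c = g * h" using assms(1) by (auto elim: dvdE)
  have "Poly_Mapping.single m c \<noteq> 0" using assms(2) by (metis lookup_single_eq lookup_zero)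
  then have nz: "g \<noteq> 0" "h \<noteq> 0" using gh by auto
  let ?Mg = "Max (Poly_Mapping.keys g)" and ?Mh = "Max (Poly_Mapping.keys h)"
  let ?mg = "Min (Poly_Mapping.keys g)" and ?mh = "Min (Poly_Mapping.keys h)"
  have ne: "Poly_Mapping.keys g \<noteq> {}" "Poly_Mapping.keys h \<noteq> {}" using nz by auto
  have "Poly_Mapping.lookup g ?Mg \<noteq> 0" "Poly_Mapping.lookup h ?Mh \<noteq> 0"
    using ne by (auto simp: in_keys_iff[symmetric])
  then have "?Mg + ?Mh \<in> Poly_Mapping.keys (g*h)"
    using lead_mult(1)[OF nz] by (simp add: in_keys_iff)
  then have M: "?Mg + ?Mh = m" using gh[symmetric] assms(2) by simp
  have "Poly_Mapping.lookup g ?mg \<noteq> 0" "Poly_Mapping.lookup h ?mh \<noteq> 0"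
    using ne by (auto simp: in_keys_iff[symmetric])
  then have "?mg + ?mh \<in> Poly_Mapping.keys (g*h)"
    using trail_mult(1)[OF nz] by (simp add: in_keys_iff)
  then have mm: "?mg + ?mh = m" using gh[symmetric] assms(2) by simp
  have le1: "?mg \<le> ?Mg" "?mh \<le> ?Mh" using ne by auto
  have eqg: "?mg = ?Mg"
  proof (rule ccontr)
    assume "?mg \<noteq> ?Mg"
    then have "?mg < ?Mg" using le1 by simp
    then have "?mg + ?mh < ?Mg + ?Mh" using le1 add_less_le_mono by blast
    then show False using M mm by simp
  qed
  have kg: "Poly_Mapping.keys g = {?Mg}"
  proof -
    have "k = ?Mg" if "k \<in> Poly_Mapping.keys g" for k
    proof -
      have "?mg \<le> k" by (rule Min_le[OF finite_keys that])
      moreover have "k \<le> ?Mg" by (rule Max_ge[OF finite_keys that])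
      ultimately show ?thesis using eqg by (metis antisym)
    qed
    moreover have "?Mg \<in> Poly_Mapping.keys g" using ne by simp
    ultimately show ?thesis by blast
  qed
  obtain M where kM: "Poly_Mapping.keys g = {M}" and MM: "M = ?Mg" using kg by blast
  have "g = (\<Sum>a\<in>Poly_Mapping.keys g. Poly_Mapping.single a (Poly_Mapping.lookup g a))"
    by (rule poly_sum_single)
  also have "\<dots> = Poly_Mapping.single M (Poly_Mapping.lookup g M)"
    unfolding kM by simp
  finally have "g = Poly_Mapping.single ?Mg (Poly_Mapping.lookup g ?Mg)" using MM by simp
  then show ?thesis using M by blast
qed


lemma const3_add: "const3 (a + b) = const3 a + const3 b" by (simp add: const3_def single_add)
lemma const3_diff: "const3 (a - b) = const3 a - const3 b" by (simp add: const3_def single_diff)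
lemma const3_mult: "const3 (a * b) = const3 a * const3 b" by (simp add: const3_def mult_single)
lemma const3_1: "const3 1 = 1" by (simp add: const3_def zero_prod_def[symmetric])
lemma const3_0: "const3 0 = 0" by (simp add: const3_def)
lemma const3_of_nat: "const3 (of_nat k) = of_nat k"
  by (simp add: const3_def zero_prod_def[symmetric])
lemma const3_numeral: "const3 (numeral k) = numeral k"
  by (simp add: const3_def zero_prod_def[symmetric])
lemma const3_single: "const3 c * Poly_Mapping.single m e = Poly_Mapping.single m (c * e)"
  by (simp add: const3_def mult_single zero_prod_def[symmetric])
lemma const3_mon: "const3 c * mon i j k = Poly_Mapping.single (i,j,k) c"
  by (simp add: mon_def const3_single)
lemma const3_inv: "c \<noteq> 0 \<Longrightarrow> const3 c * const3 (inverse c) = 1"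
  by (simp add: const3_mult[symmetric] const3_1)

lemmas const3_simps = const3_add const3_diff const3_mult const3_1 const3_0 const3_of_nat const3_numeral

lemma of_nat_mult_single: "(of_nat k :: mpoly3) * Poly_Mapping.single m c = Poly_Mapping.single m (of_nat k * c)"
  by (simp add: const3_of_nat[symmetric] const3_single)

lemma mon_nz: "mon i j k \<noteq> 0"
  by (metis lookup_single_eq lookup_zero mon_def zero_neq_one)

section \<open>Homogeneity\<close>

lemma homogeneous_0[simp]: "homogeneous k 0" by (simp add: homogeneous_def)
lemma homogeneous_add: "homogeneous k p \<Longrightarrow> homogeneous k q \<Longrightarrow> homogeneous k (p + q)"
  using keys_add[of p q] by (auto simp: homogeneous_def)
lemma homogeneous_uminus: "homogeneous k p \<Longrightarrow> homogeneous k (- p)"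
  by (simp add: homogeneous_def keys_minus)
lemma homogeneous_diff: "homogeneous k p \<Longrightarrow> homogeneous k q \<Longrightarrow> homogeneous k (p - q)"
  using homogeneous_add[of k p "-q"] homogeneous_uminus[of k q] by simp
lemma homogeneous_mult: "homogeneous a p \<Longrightarrow> homogeneous b q \<Longrightarrow> homogeneous (a + b) (p * q)"
  unfolding homogeneous_def
proof
  fix m assume h: "\<forall>m\<in>Poly_Mapping.keys p. mono_deg m = a" "\<forall>m\<in>Poly_Mapping.keys q. mono_deg m = b"
    and m: "m \<in> Poly_Mapping.keys (p * q)"
  then obtain u v where "u \<in> Poly_Mapping.keys p" "v \<in> Poly_Mapping.keys q" "m = u + v"
    using keys_mult' by blast
  moreover have "mono_deg u = a" "mono_deg v = b" using h \<open>u \<in> _\<close> \<open>v \<in> _\<close> by auto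
  ultimately show "mono_deg m = a + b"
    by (cases u; cases v) (auto simp: mono_deg_def)
qed
lemma homogeneous_single: "mono_deg m = k \<Longrightarrow> homogeneous k (Poly_Mapping.single m c)"
  by (simp add: homogeneous_def)
lemma homogeneous_mon: "i + j + l = k \<Longrightarrow> homogeneous k (mon i j l)"
  by (simp add: homogeneous_def mon_def mono_deg_def)
lemma homogeneous_const3_mult: "homogeneous k p \<Longrightarrow> homogeneous k (const3 c * p)"
  using homogeneous_mult[of 0 "const3 c" k p] by (simp add: const3_def homogeneous_def mono_deg_def)
lemma homogeneous_of_nat_mult: "homogeneous k p \<Longrightarrow> homogeneous k (of_nat a * p)"
  using homogeneous_const3_mult[of k p "of_nat a"] by (simp add: const3_of_nat)

section \<open>The curve\<close>

locale fc =
  fixes N :: nat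
  assumes N3: "N \<ge> 3"
begin

definition "ff = mon N 1 1 + mon 1 N 1 + mon 1 1 N"

lemma mon_single: "mon i j k = Poly_Mapping.single (i,j,k) 1" by (simp add: mon_def)

lemma pdX_ff: "pdX ff = of_nat N * mon (N-1) 1 1 + mon 0 N 1 + mon 0 1 N"
  by (simp add: ff_def mon_single pdX_add pdX_single of_nat_mult_single)
lemma pdY_ff: "pdY ff = mon N 0 1 + of_nat N * mon 1 (N-1) 1 + mon 1 0 N"
  by (simp add: ff_def mon_single pdY_add pdY_single of_nat_mult_single)
lemma pdZ_ff: "pdZ ff = mon N 1 0 + mon 1 N 0 + of_nat N * mon 1 1 (N-1)"
  by (simp add: ff_def mon_single pdZ_add pdZ_single of_nat_mult_single)

lemma varX_mon: "varX = mon 1 0 0" by (simp add: varX_def mon_def)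
lemma varY_mon: "varY = mon 0 1 0" by (simp add: varY_def mon_def)
lemma varZ_mon: "varZ = mon 0 0 1" by (simp add: varZ_def mon_def)

lemma xfx: "varX * pdX ff = of_nat N * mon N 1 1 + mon 1 N 1 + mon 1 1 N"
  using N3 by (simp add: pdX_ff varX_mon distrib_left mon_mult algebra_simps)
lemma yfy: "varY * pdY ff = mon N 1 1 + of_nat N * mon 1 N 1 + mon 1 1 N"
  using N3 by (simp add: pdY_ff varY_mon distrib_left mon_mult algebra_simps)
lemma zfz: "varZ * pdZ ff = mon N 1 1 + mon 1 N 1 + of_nat N * mon 1 1 N"
  using N3 by (simp add: pdZ_ff varZ_mon distrib_left mon_mult algebra_simps)

definition "cN = (of_nat N * of_nat N + of_nat N - 2 :: complex)"

lemma cN_nz: "cN \<noteq> 0"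
proof -
  have "2 \<le> N" using N3 by simp
  then have le: "2 \<le> N*N + N" by (simp add: trans_le_add2)
  have "(of_nat (N*N + N - 2) :: complex) = of_nat (N*N+N) - of_nat 2" using le by (rule of_nat_diff)
  then have "cN = of_nat (N*N + N - 2)" by (simp add: cN_def)
  moreover have "N*N + N - 2 \<noteq> 0" using N3 by (simp add: algebra_simps)
  ultimately show ?thesis by (metis of_nat_eq_0_iff)
qed

lemma comb1: "Poly_Mapping.single (N,1,1) cN =
   (of_nat N + 1) * (varX * pdX ff) - varY * pdY ff - varZ * pdZ ff"
proof -
  have "(of_nat N + 1) * (varX * pdX ff) - varY * pdY ff - varZ * pdZ ff
      = (of_nat N * of_nat N + of_nat N - 2) * mon N 1 1"
    unfolding xfx yfy zfz by (simp add: algebra_simps)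
  also have "\<dots> = const3 cN * mon N 1 1" by (simp add: cN_def const3_simps)
  finally show ?thesis by (simp add: const3_mon)
qed
lemma comb2: "Poly_Mapping.single (1,N,1) cN =
   (of_nat N + 1) * (varY * pdY ff) - varX * pdX ff - varZ * pdZ ff"
proof -
  have "(of_nat N + 1) * (varY * pdY ff) - varX * pdX ff - varZ * pdZ ff
      = (of_nat N * of_nat N + of_nat N - 2) * mon 1 N 1"
    unfolding xfx yfy zfz by (simp add: algebra_simps)
  also have "\<dots> = const3 cN * mon 1 N 1" by (simp add: cN_def const3_simps)
  finally show ?thesis by (simp add: const3_mon)
qed
lemma comb3: "Poly_Mapping.single (1,1,N) cN =
   (of_nat N + 1) * (varZ * pdZ ff) - varX * pdX ff - varY * pdY ff"
proof -
  have "(of_nat N + 1) * (varZ * pdZ ff) - varX * pdX ff - varY * pdY ff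
      = (of_nat N * of_nat N + of_nat N - 2) * mon 1 1 N"
    unfolding xfx yfy zfz by (simp add: algebra_simps)
  also have "\<dots> = const3 cN * mon 1 1 N" by (simp add: cN_def const3_simps)
  finally show ?thesis by (simp add: const3_mon)
qed

lemma lookup_ff: "Poly_Mapping.lookup ff (N,1,1) = 1" "Poly_Mapping.lookup ff (1,N,1) = 1"
  "Poly_Mapping.lookup ff (1,1,N) = 1"
  using N3 by (simp_all add: ff_def mon_single lookup_add lookup_single)

lemma ff_nz: "ff \<noteq> 0" using lookup_ff by auto

lemma ff_homogeneous: "homogeneous (N+2) ff"
  unfolding ff_def by (intro homogeneous_add homogeneous_mon) auto

lemma ff_reduced: "reduced3 ff"
  unfolding reduced3_def
proof (intro conjI allI impI)
  show "ff \<noteq> 0" by (rule ff_nz)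
  fix g assume "g * g dvd ff"
  then obtain h where "ff = g * g * h" by (rule dvdE)
  then have fh: "ff = g * (g * h)" by (simp add: mult.assoc)
  have gx: "g dvd pdX ff" unfolding fh pdX_mult by simp
  have gy: "g dvd pdY ff" unfolding fh pdY_mult by simp
  have gz: "g dvd pdZ ff" unfolding fh pdZ_mult by simp
  have d1: "g dvd Poly_Mapping.single (N,1,1) cN" unfolding comb1
    using gx gy gz by (intro dvd_diff dvd_mult) auto
  have d2: "g dvd Poly_Mapping.single (1,N,1) cN" unfolding comb2
    using gx gy gz by (intro dvd_diff dvd_mult) auto
  have d3: "g dvd Poly_Mapping.single (1,1,N) cN" unfolding comb3
    using gx gy gz by (intro dvd_diff dvd_mult) auto
  obtain m c m1 where g: "g = Poly_Mapping.single m c" and m1: "(N,1,1) = m + m1"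
    using dvd_single[OF d1 cN_nz] by blast
  obtain m' c' m2 where g': "g = Poly_Mapping.single m' c'" and m2: "(1,N,1) = m' + m2"
    using dvd_single[OF d2 cN_nz] by blast
  obtain m'' c'' m3 where g'': "g = Poly_Mapping.single m'' c''" and m3: "(1,1,N) = m'' + m3"
    using dvd_single[OF d3 cN_nz] by blast
  show "Poly_Mapping.keys g \<subseteq> {(0,0,0)}"
  proof (cases "c = 0")
    case True then show ?thesis by (simp add: g)
  next
    case False
    then have "m' = m" "m'' = m" using g g' g''
      by (metis lookup_single_eq lookup_single_not_eq)+
    obtain p q r where m: "m = (p,q,r)" by (cases m) auto
    have pqr: "p \<le> 1" "q \<le> 1" "r \<le> 1"
      using m1 m2 m3 \<open>m' = m\<close> \<open>m'' = m\<close> m by (cases m1; cases m2; cases m3; auto)+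
    have ffk: "ff = Poly_Mapping.single (p+p,q+q,r+r) (c*c) * h"
      using fh g m by (simp add: mult_single mult.assoc[symmetric])
    have "p = 0"
    proof (rule ccontr)
      assume "p \<noteq> 0" then have "p = 1" using pqr by simp
      have "(1,N,1) \<in> Poly_Mapping.keys ff" using lookup_ff by (simp add: in_keys_iff)
      then have "(1,N,1) \<in> Poly_Mapping.keys (Poly_Mapping.single (p+p,q+q,r+r) (c*c) * h)" using ffk by simp
      then obtain k where "(1,N,1) = (p+p,q+q,r+r) + k" using keys_single_mult[of "(p+p,q+q,r+r)" "c*c" h] by blast
      then show False using \<open>p = 1\<close> by (cases k) auto
    qed
    moreover have "q = 0"
    proof (rule ccontr)
      assume "q \<noteq> 0" then have "q = 1" using pqr by simp
      have "(N,1,1) \<in> Poly_Mapping.keys ff" using lookup_ff by (simp add: in_keys_iff)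
      then have "(N,1,1) \<in> Poly_Mapping.keys (Poly_Mapping.single (p+p,q+q,r+r) (c*c) * h)" using ffk by simp
      then obtain k where "(N,1,1) = (p+p,q+q,r+r) + k" using keys_single_mult[of "(p+p,q+q,r+r)" "c*c" h] by blast
      then show False using \<open>q = 1\<close> by (cases k) auto
    qed
    moreover have "r = 0"
    proof (rule ccontr)
      assume "r \<noteq> 0" then have "r = 1" using pqr by simp
      have "(N,1,1) \<in> Poly_Mapping.keys ff" using lookup_ff by (simp add: in_keys_iff)
      then have "(N,1,1) \<in> Poly_Mapping.keys (Poly_Mapping.single (p+p,q+q,r+r) (c*c) * h)" using ffk by simp
      then obtain k where "(N,1,1) = (p+p,q+q,r+r) + k" using keys_single_mult[of "(p+p,q+q,r+r)" "c*c" h] by blast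
      then show False using \<open>r = 1\<close> by (cases k) auto
    qed
    ultimately show ?thesis by (simp add: g m)
  qed
qed

end


section \<open>Restriction of supports\<close>

definition restr :: "(mono3 \<Rightarrow> bool) \<Rightarrow> mpoly3 \<Rightarrow> mpoly3" where
  "restr P p = Poly_Mapping.mapp (\<lambda>m c. if P m then c else 0) p"

lemma lookup_restr: "Poly_Mapping.lookup (restr P p) m = (if P m then Poly_Mapping.lookup p m else 0)"
  by (auto simp: restr_def lookup_mapp when_def in_keys_iff)

lemma restr_add: "restr P (p + q) = restr P p + restr P q"
  by (rule poly_mapping_eqI) (simp add: lookup_restr lookup_add)

lemma restr_0[simp]: "restr P 0 = 0"
  by (rule poly_mapping_eqI) (simp add: lookup_restr)

lemma restr_single: "restr P (Poly_Mapping.single m c) = (if P m then Poly_Mapping.single m c else 0)"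
  by (rule poly_mapping_eqI) (simp add: lookup_restr lookup_single when_def)

lemma restr_split: "p = restr P p + restr (\<lambda>m. \<not> P m) p"
  by (rule poly_mapping_eqI) (simp add: lookup_restr lookup_add)

lemma keys_restr: "Poly_Mapping.keys (restr P p) \<subseteq> {m. P m}"
  by (auto simp: in_keys_iff lookup_restr split: if_splits)

lemma keys_restr2: "Poly_Mapping.keys (restr P p) \<subseteq> Poly_Mapping.keys p"
  by (auto simp: in_keys_iff lookup_restr split: if_splits)

lemma restr_id: "(\<And>m. m \<in> Poly_Mapping.keys p \<Longrightarrow> P m) \<Longrightarrow> restr P p = p"
  by (rule poly_mapping_eqI) (auto simp: lookup_restr in_keys_iff)

lemma restr_eq_0: "(\<And>m. m \<in> Poly_Mapping.keys p \<Longrightarrow> \<not> P m) \<Longrightarrow> restr P p = 0"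
  by (rule poly_mapping_eqI) (auto simp: lookup_restr in_keys_iff)

lemma restr_mult:
  assumes hom: "\<And>m m'. P (m + m') \<longleftrightarrow> P m \<and> P m'"
  shows "restr P (p * q) = restr P p * restr P q"
proof (induction p arbitrary: q rule: poly_induct)
  case zero then show ?case by simp
next
  case (single a c)
  show ?case
  proof (induction q rule: poly_induct)
    case zero then show ?case by simp
  next
    case (single b e) then show ?case by (simp add: mult_single restr_single hom)
  next
    case (add q1 q2) then show ?case by (simp add: distrib_left restr_add)
  qed
next
  case (add p1 p2) then show ?case by (simp add: distrib_right restr_add)
qed

lemma keys_disjoint_zero:
  assumes "u = v" "Poly_Mapping.keys u \<subseteq> {m. P m}" "Poly_Mapping.keys v \<subseteq> {m. \<not> P m}"
  shows "u = 0"
proof -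
  have "Poly_Mapping.keys u = {}" using assms by blast
  then show ?thesis by simp
qed

lemma keys_uminus: "Poly_Mapping.keys (- p) = Poly_Mapping.keys p"
  by (simp add: keys_minus)

section \<open>Division by monomials\<close>

lemma mdiv:
  fixes p :: mpoly3
  assumes "\<And>m. m \<in> Poly_Mapping.keys p \<Longrightarrow> \<exists>m'. m = e + m'"
  shows "\<exists>q. p = Poly_Mapping.single e 1 * q"
proof -
  define q where "q = (\<Sum>m\<in>Poly_Mapping.keys p. Poly_Mapping.single (m - e) (Poly_Mapping.lookup p m))"
  have "Poly_Mapping.single e 1 * q = (\<Sum>m\<in>Poly_Mapping.keys p. Poly_Mapping.single (e + (m - e)) (Poly_Mapping.lookup p m))"
    by (simp add: q_def sum_distrib_left mult_single)
  also have "\<dots> = (\<Sum>m\<in>Poly_Mapping.keys p. Poly_Mapping.single m (Poly_Mapping.lookup p m))"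
  proof (rule sum.cong[OF refl])
    fix m assume "m \<in> Poly_Mapping.keys p"
    then obtain m' where "m = e + m'" using assms by blast
    then have "e + (m - e) = m" by (cases e; cases m'; simp)
    then show "Poly_Mapping.single (e + (m - e)) (Poly_Mapping.lookup p m) = Poly_Mapping.single m (Poly_Mapping.lookup p m)"
      by simp
  qed
  also have "\<dots> = p" by (rule poly_sum_single[symmetric])
  finally show ?thesis by metis
qed

lemma keys_mon_mult: "m \<in> Poly_Mapping.keys (mon i j l * w) \<Longrightarrow> \<exists>a b c. m = (i+a, j+b, l+c) \<and> (a,b,c) \<in> Poly_Mapping.keys w"
  using keys_single_mult[of "(i,j,l)" 1 w] unfolding mon_def by force

section \<open>Koszul syzygies of pure powers\<close>

lemma koszul_pure:
  fixes a b c :: mpoly3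
  assumes n: "n \<ge> 1"
  assumes eq: "a * mon n 0 0 + b * mon 0 n 0 + c * mon 0 0 n = 0"
  shows "\<exists>p q t. a = p * mon 0 n 0 + q * mon 0 0 n \<and> b = t * mon 0 0 n - p * mon n 0 0
                  \<and> c = - (t * mon 0 n 0) - q * mon n 0 0"
proof -
  let ?X = "mon n 0 0" and ?Y = "mon 0 n 0" and ?Z = "mon 0 0 n"
  define Pa where "Pa = (\<lambda>(i::nat,j::nat,l::nat). j < n \<and> l < n)"
  define Py where "Py = (\<lambda>(i::nat,j::nat,l::nat). n \<le> j)"
  define Pz where "Pz = (\<lambda>(i::nat,j::nat,l::nat). j < n \<and> n \<le> l)"
  have asplit: "a = restr Pa a + restr Py a + restr Pz a"
    by (rule poly_mapping_eqI) (auto simp: lookup_restr lookup_add Pa_def Py_def Pz_def split: prod.splits)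
  have "\<exists>q. restr Py a = Poly_Mapping.single (0,n,0) 1 * q"
  proof (rule mdiv)
    fix m assume "m \<in> Poly_Mapping.keys (restr Py a)"
    then have "m \<in> {m. Py m}" using keys_restr by blast
    then obtain i j l where "m = (i,j,l)" "Py (i,j,l)" by (cases m) auto
    then show "\<exists>m'. m = (0,n,0) + m'" by (intro exI[of _ "(i,j-n,l)"]) (auto simp: Py_def)
  qed
  then obtain p where p: "restr Py a = Poly_Mapping.single (0,n,0) 1 * p" by blast
  have "\<exists>q. restr Pz a = Poly_Mapping.single (0,0,n) 1 * q"
  proof (rule mdiv)
    fix m assume "m \<in> Poly_Mapping.keys (restr Pz a)"
    then have "m \<in> {m. Pz m}" using keys_restr by blast
    then obtain i j l where "m = (i,j,l)" "Pz (i,j,l)" by (cases m) auto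
    then show "\<exists>m'. m = (0,0,n) + m'" by (intro exI[of _ "(i,j,l-n)"]) (auto simp: Pz_def)
  qed
  then obtain q where q: "restr Pz a = Poly_Mapping.single (0,0,n) 1 * q" by blast
  define a0 where "a0 = restr Pa a"
  have ep: "Poly_Mapping.single (0,n,0) 1 * p = p * ?Y" by (simp add: mon_def mult.commute)
  have eq': "Poly_Mapping.single (0,0,n) 1 * q = q * ?Z" by (simp add: mon_def mult.commute)
  have a_eq: "a = a0 + p * ?Y + q * ?Z" using asplit unfolding p q a0_def[symmetric] ep eq' .
  have "a0 * ?X + ((b + ?X * p) * ?Y + (c + ?X * q) * ?Z) = a * ?X + b * ?Y + c * ?Z"
    unfolding a_eq by (simp add: algebra_simps)
  then have e1: "a0 * ?X = - ((b + ?X * p) * ?Y + (c + ?X * q) * ?Z)"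
    using eq by (metis add_eq_0_iff2)
  have k1: "Poly_Mapping.keys (a0 * ?X) \<subseteq> {m. Pa m}"
  proof
    fix m assume "m \<in> Poly_Mapping.keys (a0 * ?X)"
    then obtain u v w where "m = (n+u,v,w)" "(u,v,w) \<in> Poly_Mapping.keys a0"
      using keys_mon_mult[of m n 0 0 a0] by (auto simp: mult.commute)
    then show "m \<in> {m. Pa m}" using keys_restr[of Pa a] by (auto simp: a0_def Pa_def)
  qed
  have k2: "Poly_Mapping.keys (- ((b + ?X * p) * ?Y + (c + ?X * q) * ?Z)) \<subseteq> {m. \<not> Pa m}"
  proof
    fix m assume "m \<in> Poly_Mapping.keys (- ((b + ?X * p) * ?Y + (c + ?X * q) * ?Z))"
    then have "m \<in> Poly_Mapping.keys ((b + ?X * p) * ?Y + (c + ?X * q) * ?Z)" unfolding keys_uminus .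
    then have "m \<in> Poly_Mapping.keys ((b + ?X * p) * ?Y) \<union> Poly_Mapping.keys ((c + ?X * q) * ?Z)"
      using keys_add[of "(b + ?X * p) * ?Y" "(c + ?X * q) * ?Z"] by blast
    then have "m \<in> Poly_Mapping.keys (?Y * (b + ?X * p)) \<union> Poly_Mapping.keys (?Z * (c + ?X * q))"
      by (simp add: mult.commute)
    then show "m \<in> {m. \<not> Pa m}"
    proof
      assume "m \<in> Poly_Mapping.keys (?Y * (b + ?X * p))"
      then obtain u v w where "m = (0+u,n+v,0+w)" using keys_mon_mult by blast
      then show ?thesis by (simp add: Pa_def)
    next
      assume "m \<in> Poly_Mapping.keys (?Z * (c + ?X * q))"
      then obtain u v w where "m = (0+u,0+v,n+w)" using keys_mon_mult by blast
      then show ?thesis by (simp add: Pa_def)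
    qed
  qed
  have "a0 * ?X = 0" by (rule keys_disjoint_zero[OF e1 k1 k2])
  then have a0: "a0 = 0" using mon_nz by simp
  define b' where "b' = b + ?X * p"
  define c' where "c' = c + ?X * q"
  have "- ((b + ?X * p) * ?Y + (c + ?X * q) * ?Z) = 0" using e1 a0 by (simp only: mult_zero_left)
  then have e2: "b' * ?Y + c' * ?Z = 0" unfolding b'_def c'_def neg_equal_0_iff_equal .
  define Q where "Q = (\<lambda>(i::nat,j::nat,l::nat). l < n)"
  define Qn where "Qn = (\<lambda>m. \<not> Q m)"
  have "\<exists>q. restr Qn b' = Poly_Mapping.single (0,0,n) 1 * q"
  proof (rule mdiv)
    fix m assume "m \<in> Poly_Mapping.keys (restr Qn b')"
    then have "m \<in> {m. Qn m}" using keys_restr by blast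
    then obtain i j l where "m = (i,j,l)" "Qn (i,j,l)" by (cases m) auto
    then show "\<exists>m'. m = (0,0,n) + m'" by (intro exI[of _ "(i,j,l-n)"]) (auto simp: Qn_def Q_def)
  qed
  then obtain t where t: "restr Qn b' = Poly_Mapping.single (0,0,n) 1 * t" by blast
  define b0 where "b0 = restr Q b'"
  have et: "Poly_Mapping.single (0,0,n) 1 * t = t * ?Z" by (simp add: mon_def mult.commute)
  have b_eq: "b' = b0 + t * ?Z" using restr_split[of b' Q] unfolding Qn_def[symmetric] t b0_def[symmetric] et .
  have "b0 * ?Y + ((c' + ?Y * t) * ?Z) = b' * ?Y + c' * ?Z"
    unfolding b_eq by (simp add: algebra_simps)
  then have e3: "b0 * ?Y = - ((c' + ?Y * t) * ?Z)"
    using e2 by (metis add_eq_0_iff2)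
  have k3: "Poly_Mapping.keys (b0 * ?Y) \<subseteq> {m. Q m}"
  proof
    fix m assume "m \<in> Poly_Mapping.keys (b0 * ?Y)"
    then obtain u v w where "m = (u,n+v,w)" "(u,v,w) \<in> Poly_Mapping.keys b0"
      using keys_mon_mult[of m 0 n 0 b0] by (auto simp: mult.commute)
    then show "m \<in> {m. Q m}" using keys_restr[of Q b'] by (auto simp: b0_def Q_def)
  qed
  have k4: "Poly_Mapping.keys (- ((c' + ?Y * t) * ?Z)) \<subseteq> {m. \<not> Q m}"
  proof
    fix m assume "m \<in> Poly_Mapping.keys (- ((c' + ?Y * t) * ?Z))"
    then have "m \<in> Poly_Mapping.keys ((c' + ?Y * t) * ?Z)" unfolding keys_uminus .
    then have "m \<in> Poly_Mapping.keys (?Z * (c' + ?Y * t))" by (simp only: mult.commute)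
    then obtain u v w where "m = (0+u,0+v,n+w)" using keys_mon_mult by blast
    then show "m \<in> {m. \<not> Q m}" by (simp add: Q_def)
  qed
  have "b0 * ?Y = 0" by (rule keys_disjoint_zero[OF e3 k3 k4])
  then have b0: "b0 = 0" using mon_nz by simp
  have "(c' + ?Y * t) * ?Z = 0" using e3 b0 by simp
  then have c0: "c' + ?Y * t = 0" using mon_nz by simp
  show ?thesis
  proof (intro exI conjI)
    show "a = p * ?Y + q * ?Z" using a_eq a0 by simp
    show "b = t * ?Z - p * ?X" using b_eq b0 by (simp add: b'_def algebra_simps)
    have "c = (c' + ?Y * t) - (t * ?Y) - q * ?X" by (simp add: c'_def algebra_simps)
    then show "c = - (t * ?Y) - q * ?X" using c0 by simp
  qed
qed


lemma algebra_transfer: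
  fixes k nn a' b' c' p q t X Y Z :: "'a::comm_ring_1"
  assumes k: "k * (nn * nn * (nn + 3)) = 1"
    and ha: "nn * a' + (a' + b' + c') = p * Y + q * Z"
    and hb: "nn * b' + (a' + b' + c') = t * Z - p * X"
    and hc: "nn * c' + (a' + b' + c') = - (t * Y) - q * X"
  shows "a' = k * (nn * p - (- t + q - p)) * (nn * Y + (X + Y + Z)) + k * (nn * q + (- t + q - p)) * (nn * Z + (X + Y + Z))"
    and "b' = - (k * (nn * p - (- t + q - p)) * (nn * X + (X + Y + Z))) + k * (nn * t - (- t + q - p)) * (nn * Z + (X + Y + Z))"
    and "c' = - (k * (nn * q + (- t + q - p)) * (nn * X + (X + Y + Z))) - k * (nn * t - (- t + q - p)) * (nn * Y + (X + Y + Z))"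
proof -
  define T where "T = a' + b' + c'"
  define R where "R = (p * Y + q * Z) + (t * Z - p * X) + (- (t * Y) - q * X)"
  have "(nn + 3) * T = (nn * a' + T) + (nn * b' + T) + (nn * c' + T)"
    by (simp add: T_def algebra_simps numeral_3_eq_3)
  also have "\<dots> = R" using ha hb hc by (simp add: T_def R_def)
  finally have TR: "(nn + 3) * T = R" .
  have gen: "u = k * nn * (nn + 3) * (v) - k * nn * R" if hu: "nn * u + T = v" for u v
  proof -
    have "u = k * (nn * nn * (nn + 3)) * u" using k by simp
    also have "\<dots> = k * nn * (nn + 3) * (nn * u + T) - k * nn * ((nn + 3) * T)"
      by (simp add: algebra_simps)
    also have "\<dots> = k * nn * (nn + 3) * v - k * nn * R" using hu TR by simp
    finally show ?thesis .
  qed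
  show "a' = k * (nn * p - (- t + q - p)) * (nn * Y + (X + Y + Z)) + k * (nn * q + (- t + q - p)) * (nn * Z + (X + Y + Z))"
    using gen[OF ha[folded T_def]] by (simp add: R_def algebra_simps numeral_3_eq_3)
  show "b' = - (k * (nn * p - (- t + q - p)) * (nn * X + (X + Y + Z))) + k * (nn * t - (- t + q - p)) * (nn * Z + (X + Y + Z))"
    using gen[OF hb[folded T_def]] by (simp add: R_def algebra_simps numeral_3_eq_3)
  show "c' = - (k * (nn * q + (- t + q - p)) * (nn * X + (X + Y + Z))) - k * (nn * t - (- t + q - p)) * (nn * Y + (X + Y + Z))"
    using gen[OF hc[folded T_def]] by (simp add: R_def algebra_simps numeral_3_eq_3)
qed

lemma restr_zero_keys: "restr P a = 0 \<Longrightarrow> m \<in> Poly_Mapping.keys a \<Longrightarrow> \<not> P m"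
  by (metis lookup_restr lookup_zero in_keys_iff)

lemma divX: assumes "restr (\<lambda>m. fst m = 0) a = 0" shows "\<exists>a'. a = varX * a'"
proof -
  have "\<exists>q. a = Poly_Mapping.single (1,0,0) 1 * q"
  proof (rule mdiv)
    fix m assume "m \<in> Poly_Mapping.keys a"
    then have "fst m \<noteq> 0" using restr_zero_keys[OF assms] by blast
    then obtain i j l where "m = (i,j,l)" "i \<noteq> 0" by (cases m) auto
    then show "\<exists>m'. m = (1,0,0) + m'" by (intro exI[of _ "(i-1,j,l)"]) auto
  qed
  then show ?thesis by (simp add: varX_def)
qed
lemma divY: assumes "restr (\<lambda>m. fst (snd m) = 0) a = 0" shows "\<exists>a'. a = varY * a'"
proof -
  have "\<exists>q. a = Poly_Mapping.single (0,1,0) 1 * q"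
  proof (rule mdiv)
    fix m assume "m \<in> Poly_Mapping.keys a"
    then have "fst (snd m) \<noteq> 0" using restr_zero_keys[OF assms] by blast
    then obtain i j l where "m = (i,j,l)" "j \<noteq> 0" by (cases m) auto
    then show "\<exists>m'. m = (0,1,0) + m'" by (intro exI[of _ "(i,j-1,l)"]) auto
  qed
  then show ?thesis by (simp add: varY_def)
qed
lemma divZ: assumes "restr (\<lambda>m. snd (snd m) = 0) a = 0" shows "\<exists>a'. a = varZ * a'"
proof -
  have "\<exists>q. a = Poly_Mapping.single (0,0,1) 1 * q"
  proof (rule mdiv)
    fix m assume "m \<in> Poly_Mapping.keys a"
    then have "snd (snd m) \<noteq> 0" using restr_zero_keys[OF assms] by blast
    then obtain i j l where "m = (i,j,l)" "l \<noteq> 0" by (cases m) auto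
    then show "\<exists>m'. m = (0,0,1) + m'" by (intro exI[of _ "(i,j,l-1)"]) auto
  qed
  then show ?thesis by (simp add: varZ_def)
qed

lemma restr_hom_X: "restr (\<lambda>m. fst m = 0) (p * q) = restr (\<lambda>m. fst m = 0) p * restr (\<lambda>m. fst m = 0) q"
  by (rule restr_mult) auto
lemma restr_hom_Y: "restr (\<lambda>m. fst (snd m) = 0) (p * q) = restr (\<lambda>m. fst (snd m) = 0) p * restr (\<lambda>m. fst (snd m) = 0) q"
  by (rule restr_mult) auto
lemma restr_hom_Z: "restr (\<lambda>m. snd (snd m) = 0) (p * q) = restr (\<lambda>m. snd (snd m) = 0) p * restr (\<lambda>m. snd (snd m) = 0) q"
  by (rule restr_mult) auto

lemma restr_varX: "restr (\<lambda>m. fst m = 0) varX = 0" by (simp add: varX_def restr_single)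
lemma restr_varY: "restr (\<lambda>m. fst (snd m) = 0) varY = 0" by (simp add: varY_def restr_single)
lemma restr_varZ: "restr (\<lambda>m. snd (snd m) = 0) varZ = 0" by (simp add: varZ_def restr_single)

context fc
begin

definition "XX = mon (N-1) 0 0"
definition "YY = mon 0 (N-1) 0"
definition "ZZ = mon 0 0 (N-1)"
definition "AA = of_nat N * XX + YY + ZZ"
definition "BB = XX + of_nat N * YY + ZZ"
definition "CC = XX + YY + of_nat N * ZZ"

lemma pdX_ff': "pdX ff = varY * varZ * AA"
  using N3 by (simp add: pdX_ff AA_def XX_def YY_def ZZ_def varY_mon varZ_mon mon_mult algebra_simps)
lemma pdY_ff': "pdY ff = varX * varZ * BB"
  using N3 by (simp add: pdY_ff BB_def XX_def YY_def ZZ_def varX_mon varZ_mon mon_mult algebra_simps)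
lemma pdZ_ff': "pdZ ff = varX * varY * CC"
  using N3 by (simp add: pdZ_ff CC_def XX_def YY_def ZZ_def varX_mon varY_mon mon_mult algebra_simps)

definition "g1 = (varX * BB, - (varY * AA), 0::mpoly3)"
definition "g2 = (varX * CC, 0::mpoly3, - (varZ * AA))"
definition "g3 = (0::mpoly3, varY * CC, - (varZ * BB))"

lemma g_in_D0: "g1 \<in> D0 ff" "g2 \<in> D0 ff" "g3 \<in> D0 ff"
  by (simp_all add: D0_def g1_def g2_def g3_def pdX_ff' pdY_ff' pdZ_ff' algebra_simps)

lemma lookup_pdX_ff: "Poly_Mapping.lookup (pdX ff) (0,N,1) = 1"
  using N3 by (simp add: pdX_ff mon_single lookup_add of_nat_mult_single lookup_single)
lemma lookup_pdY_ff: "Poly_Mapping.lookup (pdY ff) (N,0,1) = 1"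
  using N3 by (simp add: pdY_ff mon_single lookup_add of_nat_mult_single lookup_single)
lemma lookup_pdZ_ff: "Poly_Mapping.lookup (pdZ ff) (N,1,0) = 1"
  using N3 by (simp add: pdZ_ff mon_single lookup_add of_nat_mult_single lookup_single)

lemma restrX_pdX: "restr (\<lambda>m. fst m = 0) (pdX ff) \<noteq> 0"
proof
  assume "restr (\<lambda>m. fst m = 0) (pdX ff) = 0"
  then have "Poly_Mapping.lookup (restr (\<lambda>m. fst m = 0) (pdX ff)) (0,N,1) = 0" by simp
  then show False using lookup_pdX_ff by (simp add: lookup_restr)
qed
lemma restrY_pdY: "restr (\<lambda>m. fst (snd m) = 0) (pdY ff) \<noteq> 0"
proof
  assume "restr (\<lambda>m. fst (snd m) = 0) (pdY ff) = 0"
  then have "Poly_Mapping.lookup (restr (\<lambda>m. fst (snd m) = 0) (pdY ff)) (N,0,1) = 0" by simp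
  then show False using lookup_pdY_ff by (simp add: lookup_restr)
qed
lemma restrZ_pdZ: "restr (\<lambda>m. snd (snd m) = 0) (pdZ ff) \<noteq> 0"
proof
  assume "restr (\<lambda>m. snd (snd m) = 0) (pdZ ff) = 0"
  then have "Poly_Mapping.lookup (restr (\<lambda>m. snd (snd m) = 0) (pdZ ff)) (N,1,0) = 0" by simp
  then show False using lookup_pdZ_ff by (simp add: lookup_restr)
qed

lemma D0_div:
  assumes "(a,b,c) \<in> D0 ff"
  shows "\<exists>a' b' c'. a = varX * a' \<and> b = varY * b' \<and> c = varZ * c' \<and> a' * AA + b' * BB + c' * CC = 0"
proof -
  have eq: "a * pdX ff + b * pdY ff + c * pdZ ff = 0" using assms by (simp add: D0_def)
  let ?rX = "restr (\<lambda>m. fst m = 0)" and ?rY = "restr (\<lambda>m. fst (snd m) = 0)" and ?rZ = "restr (\<lambda>m. snd (snd m) = 0)"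
  have "?rX (a * pdX ff + b * pdY ff + c * pdZ ff) = ?rX a * ?rX (pdX ff)"
    unfolding restr_add restr_hom_X pdY_ff' pdZ_ff' restr_varX by simp
  then have "?rX a * ?rX (pdX ff) = 0" using eq by simp
  then have "?rX a = 0" using restrX_pdX by simp
  then obtain a' where a': "a = varX * a'" using divX by blast
  have "?rY (a * pdX ff + b * pdY ff + c * pdZ ff) = ?rY b * ?rY (pdY ff)"
    unfolding restr_add restr_hom_Y pdX_ff' pdZ_ff' restr_varY by simp
  then have "?rY b * ?rY (pdY ff) = 0" using eq by simp
  then have "?rY b = 0" using restrY_pdY by simp
  then obtain b' where b': "b = varY * b'" using divY by blast
  have "?rZ (a * pdX ff + b * pdY ff + c * pdZ ff) = ?rZ c * ?rZ (pdZ ff)"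
    unfolding restr_add restr_hom_Z pdX_ff' pdY_ff' restr_varZ by simp
  then have "?rZ c * ?rZ (pdZ ff) = 0" using eq by simp
  then have "?rZ c = 0" using restrZ_pdZ by simp
  then obtain c' where c': "c = varZ * c'" using divZ by blast
  have "(varX * varY * varZ) * (a' * AA + b' * BB + c' * CC) = 0"
    using eq unfolding a' b' c' pdX_ff' pdY_ff' pdZ_ff' by (simp add: algebra_simps)
  moreover have "varX * varY * varZ \<noteq> 0" by (simp add: varX_mon varY_mon varZ_mon mon_mult mon_nz)
  ultimately have "a' * AA + b' * BB + c' * CC = 0" by simp
  then show ?thesis using a' b' c' by blast
qed

definition "nnc = (of_nat N - 1 :: complex)"
definition "Dc = nnc * nnc * (nnc + 3)"
lemma Dc_nz: "Dc \<noteq> 0"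
proof -
  have "nnc \<noteq> 0" using N3 by (simp add: nnc_def)
  moreover have "nnc + 3 = of_nat (N + 2)" by (simp add: nnc_def)
  then have "nnc + 3 \<noteq> 0" by (metis of_nat_eq_0_iff add_eq_0_iff_both_eq_0 zero_neq_numeral)
  ultimately show ?thesis by (simp add: Dc_def)
qed

lemma D0_gen:
  assumes "(a,b,c) \<in> D0 ff"
  shows "\<exists>s1 s2 s3. a = s1 * fst g1 + s2 * fst g2 + s3 * fst g3
     \<and> b = s1 * fst (snd g1) + s2 * fst (snd g2) + s3 * fst (snd g3)
     \<and> c = s1 * snd (snd g1) + s2 * snd (snd g2) + s3 * snd (snd g3)"
proof -
  obtain a' b' c' where abc: "a = varX * a'" "b = varY * b'" "c = varZ * c'"
    and syz: "a' * AA + b' * BB + c' * CC = 0"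
    using D0_div[OF assms] by blast
  define nn where "nn = (of_nat N - 1 :: mpoly3)"
  define T where "T = a' + b' + c'"
  have AA': "AA = nn * XX + (XX + YY + ZZ)" by (simp add: AA_def nn_def algebra_simps)
  have BB': "BB = nn * YY + (XX + YY + ZZ)" by (simp add: BB_def nn_def algebra_simps)
  have CC': "CC = nn * ZZ + (XX + YY + ZZ)" by (simp add: CC_def nn_def algebra_simps)
  have "(nn * a' + T) * XX + (nn * b' + T) * YY + (nn * c' + T) * ZZ = a' * AA + b' * BB + c' * CC"
    unfolding AA' BB' CC' T_def by (simp add: algebra_simps)
  then have "(nn * a' + T) * mon (N-1) 0 0 + (nn * b' + T) * mon 0 (N-1) 0 + (nn * c' + T) * mon 0 0 (N-1) = 0"
    using syz by (simp add: XX_def YY_def ZZ_def)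
  then obtain p q t where pqt: "nn * a' + T = p * YY + q * ZZ" "nn * b' + T = t * ZZ - p * XX"
     "nn * c' + T = - (t * YY) - q * XX"
    using koszul_pure[of "N-1"] N3 unfolding XX_def YY_def ZZ_def by fastforce
  define k where "k = const3 (inverse Dc)"
  have nnD: "nn * nn * (nn + 3) = const3 Dc"
    by (simp add: nn_def Dc_def nnc_def const3_simps)
  have k: "k * (nn * nn * (nn + 3)) = 1"
    unfolding nnD k_def by (simp add: mult.commute const3_inv Dc_nz)
  note tr = algebra_transfer[OF k pqt[unfolded T_def], folded AA' BB' CC']
  show ?thesis
  proof (intro exI conjI)
    show "a = k * (nn * p - (- t + q - p)) * fst g1 + k * (nn * q + (- t + q - p)) * fst g2 + (k * (nn * t - (- t + q - p))) * fst g3"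
      unfolding abc tr(1) by (simp add: g1_def g2_def g3_def algebra_simps)
    show "b = k * (nn * p - (- t + q - p)) * fst (snd g1) + k * (nn * q + (- t + q - p)) * fst (snd g2) + (k * (nn * t - (- t + q - p))) * fst (snd g3)"
      unfolding abc tr(2) by (simp add: g1_def g2_def g3_def algebra_simps)
    show "c = k * (nn * p - (- t + q - p)) * snd (snd g1) + k * (nn * q + (- t + q - p)) * snd (snd g2) + (k * (nn * t - (- t + q - p))) * snd (snd g3)"
      unfolding abc tr(3) by (simp add: g1_def g2_def g3_def algebra_simps)
  qed
qed

end


lemma smult3_simps:
  "fst (smult3 s v) = s * fst v" "fst (snd (smult3 s v)) = s * fst (snd v)" "snd (snd (smult3 s v)) = s * snd (snd v)"
  by (cases v; simp add: smult3_def)+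

lemma sel_sum:
  "fst (\<Sum>j\<in>A. f j) = (\<Sum>j\<in>A. fst (f j))"
  "fst (snd (\<Sum>j\<in>A. f j)) = (\<Sum>j\<in>A. fst (snd (f j)))"
  "snd (snd (\<Sum>j\<in>A. f j)) = (\<Sum>j\<in>A. snd (snd (f j)))"
  by (simp_all add: fst_sum snd_sum)

lemma mono_deg_add: "mono_deg (u + v) = mono_deg u + mono_deg v"
  by (cases u; cases v) (simp add: mono_deg_def)

lemma lookup_const3_mult: "Poly_Mapping.lookup (const3 c * w) m = c * Poly_Mapping.lookup w m"
proof (induction w rule: poly_induct)
  case zero then show ?case by simp
next
  case (single a e) then show ?case by (simp add: const3_single lookup_single when_def)
next
  case (add p q) then show ?case by (simp add: distrib_left lookup_add)
qed

definition "degge e w \<longleftrightarrow> (\<forall>m\<in>Poly_Mapping.keys w. e \<le> mono_deg m)"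

lemma degge_add: "degge e u \<Longrightarrow> degge e v \<Longrightarrow> degge e (u + v)"
  unfolding degge_def using keys_add[of u v] by blast

lemma degge_mult: "degge e w \<Longrightarrow> degge e (s * w)"
  unfolding degge_def
proof
  fix m assume h: "\<forall>m\<in>Poly_Mapping.keys w. e \<le> mono_deg m" and m: "m \<in> Poly_Mapping.keys (s * w)"
  then obtain u v where "u \<in> Poly_Mapping.keys s" "v \<in> Poly_Mapping.keys w" "m = u + v"
    using keys_mult' by blast
  then show "e \<le> mono_deg m" using h by (auto simp: mono_deg_add)
qed

lemma degge_hom: "homogeneous e w \<Longrightarrow> degge e w"
  by (simp add: degge_def homogeneous_def)

lemma mono_deg_pos: "u \<noteq> 0 \<Longrightarrow> mono_deg u \<ge> 1"
  by (cases u) (auto simp: mono_deg_def zero_prod_def)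

lemma lookup_mult_low:
  fixes s w :: mpoly3
  assumes "degge e w" "mono_deg m = e"
  shows "Poly_Mapping.lookup (s * w) m = Poly_Mapping.lookup s 0 * Poly_Mapping.lookup w m"
proof -
  define c where "c = Poly_Mapping.lookup s 0"
  define s1 where "s1 = s - const3 c"
  have s: "s = const3 c + s1" by (simp add: s1_def)
  have k0: "0 \<notin> Poly_Mapping.keys s1"
    by (simp add: s1_def c_def in_keys_iff lookup_minus const3_def zero_prod_def)
  have "Poly_Mapping.lookup (s1 * w) m = 0"
  proof (rule ccontr)
    assume "Poly_Mapping.lookup (s1 * w) m \<noteq> 0"
    then have "m \<in> Poly_Mapping.keys (s1 * w)" by (simp add: in_keys_iff)
    then obtain u v where "u \<in> Poly_Mapping.keys s1" "v \<in> Poly_Mapping.keys w" "m = u + v"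
      using keys_mult' by blast
    moreover have "u \<noteq> 0" using k0 \<open>u \<in> _\<close> by blast
    ultimately have "mono_deg m \<ge> 1 + e" using assms(1) mono_deg_pos[of u]
      by (auto simp: mono_deg_add degge_def)
    then show False using assms(2) by simp
  qed
  moreover have "s * w = const3 c * w + s1 * w" by (simp add: s1_def algebra_simps)
  ultimately show ?thesis by (simp add: lookup_add lookup_const3_mult c_def)
qed

lemma sum_pad2:
  fixes f :: "nat \<Rightarrow> complex"
  assumes "k \<le> 2"
  shows "(\<Sum>j<k. f j) = (if 0 < k then f 0 else 0) + (if 1 < k then f 1 else 0)"
proof -
  have "k = 0 \<or> k = 1 \<or> k = 2" using assms by auto
  then show ?thesis by (auto simp: numeral_2_eq_2)
qed

lemma det_rank2:
  fixes a0 a1 b0 b1 c0 c1 x0 x1 y0 y1 z0 z1 :: complex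
  shows "(a0*x0 + a1*x1) * ((b0*y0 + b1*y1) * (c0*z0 + c1*z1) - (b0*z0 + b1*z1) * (c0*y0 + c1*y1))
       - (a0*y0 + a1*y1) * ((b0*x0 + b1*x1) * (c0*z0 + c1*z1) - (b0*z0 + b1*z1) * (c0*x0 + c1*x1))
       + (a0*z0 + a1*z1) * ((b0*x0 + b1*x1) * (c0*y0 + c1*y1) - (b0*y0 + b1*y1) * (c0*x0 + c1*x1)) = 0"
  by algebra

context fc
begin

lemma hom_g:
  "homogeneous N (fst g1)" "homogeneous N (fst (snd g1))" "homogeneous N (snd (snd g1))"
  "homogeneous N (fst g2)" "homogeneous N (fst (snd g2))" "homogeneous N (snd (snd g2))"
  "homogeneous N (fst g3)" "homogeneous N (fst (snd g3))" "homogeneous N (snd (snd g3))"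
proof -
  have h1: "homogeneous 1 varX" "homogeneous 1 varY" "homogeneous 1 varZ"
    by (simp_all add: varX_mon varY_mon varZ_mon homogeneous_mon)
  have hX: "homogeneous (N-1) XX" "homogeneous (N-1) YY" "homogeneous (N-1) ZZ"
    by (simp_all add: XX_def YY_def ZZ_def homogeneous_mon)
  have hA: "homogeneous (N-1) AA" "homogeneous (N-1) BB" "homogeneous (N-1) CC"
    unfolding AA_def BB_def CC_def using hX by (auto intro!: homogeneous_add homogeneous_of_nat_mult)
  have e: "1 + (N - 1) = N" "Suc (N - Suc 0) = N" using N3 by simp_all
  show "homogeneous N (fst g1)" "homogeneous N (fst (snd g1))" "homogeneous N (snd (snd g1))"
  "homogeneous N (fst g2)" "homogeneous N (fst (snd g2))" "homogeneous N (snd (snd g2))"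
  "homogeneous N (fst g3)" "homogeneous N (fst (snd g3))" "homogeneous N (snd (snd g3))"
    unfolding g1_def g2_def g3_def using homogeneous_mult[OF h1(1) hA(1)] homogeneous_mult[OF h1(1) hA(2)]
      homogeneous_mult[OF h1(1) hA(3)] homogeneous_mult[OF h1(2) hA(1)] homogeneous_mult[OF h1(2) hA(2)]
      homogeneous_mult[OF h1(2) hA(3)] homogeneous_mult[OF h1(3) hA(1)] homogeneous_mult[OF h1(3) hA(2)]
      homogeneous_mult[OF h1(3) hA(3)]
    by (simp_all add: e homogeneous_uminus)
qed

lemma D0_degge:
  assumes "v \<in> D0 ff"
  shows "degge N (fst v)" "degge N (fst (snd v))" "degge N (snd (snd v))"
proof -
  obtain a b c where v: "v = (a,b,c)" by (cases v) auto
  obtain s1 s2 s3 where abc: "a = s1 * fst g1 + s2 * fst g2 + s3 * fst g3"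
     "b = s1 * fst (snd g1) + s2 * fst (snd g2) + s3 * fst (snd g3)"
     "c = s1 * snd (snd g1) + s2 * snd (snd g2) + s3 * snd (snd g3)"
    using D0_gen assms v by blast
  note hg = hom_g[THEN degge_hom]
  show "degge N (fst v)" "degge N (fst (snd v))" "degge N (snd (snd v))"
    unfolding v abc fst_conv snd_conv using hg by (auto intro!: degge_add degge_mult)
qed

definition "phi1 v = Poly_Mapping.lookup (fst v) (1, N-1, 0)"
definition "phi2 v = Poly_Mapping.lookup (fst v) (1, 0, N-1)"
definition "phi3 v = Poly_Mapping.lookup (snd (snd v)) (0, N-1, 1)"

lemma phi_comb:
  assumes "\<And>j. j < k \<Longrightarrow> v j \<in> D0 ff"
  shows "phi1 (\<Sum>j<k. smult3 (s j) (v j)) = (\<Sum>j<k. Poly_Mapping.lookup (s j) 0 * phi1 (v j))"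
    and "phi2 (\<Sum>j<k. smult3 (s j) (v j)) = (\<Sum>j<k. Poly_Mapping.lookup (s j) 0 * phi2 (v j))"
    and "phi3 (\<Sum>j<k. smult3 (s j) (v j)) = (\<Sum>j<k. Poly_Mapping.lookup (s j) 0 * phi3 (v j))"
proof -
  have d: "mono_deg (1, N-1, 0) = N" "mono_deg (1, 0, N-1) = N" "mono_deg (0, N-1, 1) = N"
    using N3 by (simp_all add: mono_deg_def)
  show "phi1 (\<Sum>j<k. smult3 (s j) (v j)) = (\<Sum>j<k. Poly_Mapping.lookup (s j) 0 * phi1 (v j))"
    unfolding phi1_def sel_sum smult3_simps lookup_sum
    by (rule sum.cong[OF refl]) (rule lookup_mult_low[OF D0_degge(1)[OF assms] d(1)], simp)
  show "phi2 (\<Sum>j<k. smult3 (s j) (v j)) = (\<Sum>j<k. Poly_Mapping.lookup (s j) 0 * phi2 (v j))"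
    unfolding phi2_def sel_sum smult3_simps lookup_sum
    by (rule sum.cong[OF refl]) (rule lookup_mult_low[OF D0_degge(1)[OF assms] d(2)], simp)
  show "phi3 (\<Sum>j<k. smult3 (s j) (v j)) = (\<Sum>j<k. Poly_Mapping.lookup (s j) 0 * phi3 (v j))"
    unfolding phi3_def sel_sum smult3_simps lookup_sum
    by (rule sum.cong[OF refl]) (rule lookup_mult_low[OF D0_degge(3)[OF assms] d(3)], simp)
qed

lemma phi_vals:
  "phi1 g1 = of_nat N" "phi2 g1 = 1" "phi3 g1 = 0"
  "phi1 g2 = 1" "phi2 g2 = of_nat N" "phi3 g2 = -1"
  "phi1 g3 = 0" "phi2 g3 = 0" "phi3 g3 = - of_nat N"
  using N3
  by (simp_all add: phi1_def phi2_def phi3_def g1_def g2_def g3_def AA_def BB_def CC_def XX_def YY_def ZZ_def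
      varX_mon varY_mon varZ_mon distrib_left mon_mult algebra_simps of_nat_mult_single lookup_add
      mon_single lookup_single mult_single lookup_minus when_def)

end


lemma smult3_1: "smult3 1 v = v" by (cases v) (simp add: smult3_def)
lemma smult3_0: "smult3 0 v = 0" by (cases v) (simp add: smult3_def zero_prod_def)

lemma sum3: "(\<Sum>i<3. f i) = f 0 + f 1 + f (2::nat)"
  by (simp add: numeral_3_eq_3 numeral_2_eq_2 add.assoc)

lemma D0_smult: "v \<in> D0 f \<Longrightarrow> smult3 s v \<in> D0 f"
proof (cases v)
  case (fields a b c)
  assume "v \<in> D0 f"
  then have h: "a * pdX f + b * pdY f + c * pdZ f = 0" by (simp add: fields D0_def)
  have "s * a * pdX f + s * b * pdY f + s * c * pdZ f = s * (a * pdX f + b * pdY f + c * pdZ f)"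
    by (simp add: algebra_simps)
  then show ?thesis using h by (simp add: fields D0_def smult3_def)
qed
  
lemma D0_add: "v \<in> D0 f \<Longrightarrow> w \<in> D0 f \<Longrightarrow> v + w \<in> D0 f"
  by (cases v; cases w) (auto simp: D0_def algebra_simps)

lemma D0_zero: "0 \<in> D0 f"
  by (simp add: D0_def zero_prod_def)

lemma D0_sum: "(\<And>j. j \<in> A \<Longrightarrow> v j \<in> D0 f) \<Longrightarrow> (\<Sum>j\<in>A. v j) \<in> D0 f"
  by (induction A rule: infinite_finite_induct) (auto simp: D0_zero intro: D0_add)

lemma gen_module3_mem: "j < length G \<Longrightarrow> G ! j \<in> gen_module3 G"
proof -
  assume j: "j < length G"
  have "(\<Sum>i<length G. smult3 (if i = j then 1 else 0) (G ! i)) = (\<Sum>i<length G. if i = j then G ! i else 0)"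
    by (rule sum.cong) (auto simp: smult3_1 smult3_0)
  also have "\<dots> = G ! j" using j by (simp add: sum.delta)
  finally have "G ! j = (\<Sum>i<length G. smult3 (if i = j then 1 else 0) (G ! i))" by (rule sym)
  note eqj = this
  show ?thesis unfolding gen_module3_def mem_Collect_eq
    by (intro exI[where x="\<lambda>i. if i = j then 1 else 0"] conjI TrueI) (rule eqj)
qed

context fc
begin

lemma gen3: "gen_module3 [g1, g2, g3] = D0 ff"
proof
  show "gen_module3 [g1, g2, g3] \<subseteq> D0 ff"
    unfolding gen_module3_def using g_in_D0
    by (auto simp: sum3 intro!: D0_add D0_smult)
  show "D0 ff \<subseteq> gen_module3 [g1, g2, g3]"
  proof
    fix v assume v: "v \<in> D0 ff"
    obtain a b c where vabc: "v = (a,b,c)" by (cases v) auto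
    obtain s1 s2 s3 where abc: "a = s1 * fst g1 + s2 * fst g2 + s3 * fst g3"
     "b = s1 * fst (snd g1) + s2 * fst (snd g2) + s3 * fst (snd g3)"
     "c = s1 * snd (snd g1) + s2 * snd (snd g2) + s3 * snd (snd g3)"
      using D0_gen v vabc by blast
    define s where "s = (\<lambda>i::nat. if i = 0 then s1 else if i = 1 then s2 else s3)"
    have "v = (\<Sum>i<length [g1,g2,g3]. smult3 (s i) ([g1,g2,g3] ! i))"
      unfolding vabc abc by (cases g1; cases g2; cases g3) (simp add: sum3 s_def smult3_def)
    then show "v \<in> gen_module3 [g1, g2, g3]" unfolding gen_module3_def by blast
  qed
qed

lemma BB_nz: "BB \<noteq> 0"
proof
  assume "BB = 0"
  then have "Poly_Mapping.lookup BB (N-1,0,0) = 0" by simp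
  then show False using N3
    by (simp add: BB_def XX_def YY_def ZZ_def mon_single lookup_add of_nat_mult_single lookup_single)
qed
lemma CC_nz: "CC \<noteq> 0"
proof
  assume "CC = 0"
  then have "Poly_Mapping.lookup CC (N-1,0,0) = 0" by simp
  then show False using N3
    by (simp add: CC_def XX_def YY_def ZZ_def mon_single lookup_add of_nat_mult_single lookup_single)
qed

lemma g_nz: "g1 \<noteq> 0" "g2 \<noteq> 0" "g3 \<noteq> 0"
  using BB_nz CC_nz
  by (auto simp: g1_def g2_def g3_def zero_prod_def varX_mon varY_mon varZ_mon mon_nz)

lemma g_hom: "homogeneous3 N g1" "homogeneous3 N g2" "homogeneous3 N g3"
  using hom_g by (cases g1; cases g2; cases g3; simp add: homogeneous3_def)+

lemma det_nz: "(of_nat N :: complex) * (of_nat N * (- of_nat N) - (-1) * 0) - 1 * (1 * (- of_nat N) - (-1) * 0)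
    + 0 * (1 * 0 - of_nat N * 0) \<noteq> 0"
proof -
  have "3*3 \<le> N*N" using mult_le_mono[OF N3 N3] .
  then have "1 < N*N" by simp
  moreover have "0 < N" using N3 by simp
  ultimately have "N * 1 < N * (N * N)" by (rule mult_strict_left_mono)
  then have "N < N * N * N" by (simp add: mult.assoc)
  then have "(of_nat (N*N*N) :: complex) \<noteq> of_nat N" by (metis less_irrefl of_nat_eq_iff)
  then show ?thesis by (simp add: algebra_simps)
qed

lemma minimal:
  assumes G: "gen_module3 G = D0 ff"
  shows "3 \<le> length G"
proof (rule ccontr)
  assume "\<not> 3 \<le> length G"
  then have k2: "length G \<le> 2" by simp
  define k where "k = length G"
  have GD: "G ! j \<in> D0 ff" if "j < k" for j using gen_module3_mem[of j G] that G k_def by simp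
  obtain s1 where s1: "g1 = (\<Sum>j<k. smult3 (s1 j) (G ! j))"
    using g_in_D0(1) G unfolding gen_module3_def k_def by blast
  obtain s2 where s2: "g2 = (\<Sum>j<k. smult3 (s2 j) (G ! j))"
    using g_in_D0(2) G unfolding gen_module3_def k_def by blast
  obtain s3 where s3: "g3 = (\<Sum>j<k. smult3 (s3 j) (G ! j))"
    using g_in_D0(3) G unfolding gen_module3_def k_def by blast
  define e where "e = (\<lambda>(s::nat \<Rightarrow> mpoly3) j. if j < k then Poly_Mapping.lookup (s j) 0 else (0::complex))"
  define t1 where "t1 = (\<lambda>j. if j < k then phi1 (G ! j) else 0)"
  define t2 where "t2 = (\<lambda>j. if j < k then phi2 (G ! j) else 0)"
  define t3 where "t3 = (\<lambda>j. if j < k then phi3 (G ! j) else 0)"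
  have pad: "(\<Sum>j<k. Poly_Mapping.lookup (s j) 0 * phi (G ! j)) = e s 0 * t 0 + e s 1 * t 1"
    if "t = (\<lambda>j. if j < k then phi (G ! j) else 0)" for s :: "nat \<Rightarrow> mpoly3" and phi t
    using sum_pad2[OF k2[folded k_def]] that by (simp add: e_def)
  note pc = phi_comb[of k "\<lambda>j. G ! j", OF GD]
  have v1_1: "phi1 g1 = e s1 0 * t1 0 + e s1 1 * t1 1"
  proof -
    have "phi1 g1 = (\<Sum>j<k. Poly_Mapping.lookup (s1 j) 0 * phi1 (G ! j))"
      unfolding s1 by (rule pc(1))
    also have "\<dots> = e s1 0 * t1 0 + e s1 1 * t1 1"
      by (rule pad) (simp add: t1_def)
    finally show ?thesis .
  qed
  have v1_2: "phi2 g1 = e s1 0 * t2 0 + e s1 1 * t2 1"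
  proof -
    have "phi2 g1 = (\<Sum>j<k. Poly_Mapping.lookup (s1 j) 0 * phi2 (G ! j))"
      unfolding s1 by (rule pc(2))
    also have "\<dots> = e s1 0 * t2 0 + e s1 1 * t2 1"
      by (rule pad) (simp add: t2_def)
    finally show ?thesis .
  qed
  have v1_3: "phi3 g1 = e s1 0 * t3 0 + e s1 1 * t3 1"
  proof -
    have "phi3 g1 = (\<Sum>j<k. Poly_Mapping.lookup (s1 j) 0 * phi3 (G ! j))"
      unfolding s1 by (rule pc(3))
    also have "\<dots> = e s1 0 * t3 0 + e s1 1 * t3 1"
      by (rule pad) (simp add: t3_def)
    finally show ?thesis .
  qed
  have v2_1: "phi1 g2 = e s2 0 * t1 0 + e s2 1 * t1 1"
  proof -
    have "phi1 g2 = (\<Sum>j<k. Poly_Mapping.lookup (s2 j) 0 * phi1 (G ! j))"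
      unfolding s2 by (rule pc(1))
    also have "\<dots> = e s2 0 * t1 0 + e s2 1 * t1 1"
      by (rule pad) (simp add: t1_def)
    finally show ?thesis .
  qed
  have v2_2: "phi2 g2 = e s2 0 * t2 0 + e s2 1 * t2 1"
  proof -
    have "phi2 g2 = (\<Sum>j<k. Poly_Mapping.lookup (s2 j) 0 * phi2 (G ! j))"
      unfolding s2 by (rule pc(2))
    also have "\<dots> = e s2 0 * t2 0 + e s2 1 * t2 1"
      by (rule pad) (simp add: t2_def)
    finally show ?thesis .
  qed
  have v2_3: "phi3 g2 = e s2 0 * t3 0 + e s2 1 * t3 1"
  proof -
    have "phi3 g2 = (\<Sum>j<k. Poly_Mapping.lookup (s2 j) 0 * phi3 (G ! j))"
      unfolding s2 by (rule pc(3))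
    also have "\<dots> = e s2 0 * t3 0 + e s2 1 * t3 1"
      by (rule pad) (simp add: t3_def)
    finally show ?thesis .
  qed
  have v3_1: "phi1 g3 = e s3 0 * t1 0 + e s3 1 * t1 1"
  proof -
    have "phi1 g3 = (\<Sum>j<k. Poly_Mapping.lookup (s3 j) 0 * phi1 (G ! j))"
      unfolding s3 by (rule pc(1))
    also have "\<dots> = e s3 0 * t1 0 + e s3 1 * t1 1"
      by (rule pad) (simp add: t1_def)
    finally show ?thesis .
  qed
  have v3_2: "phi2 g3 = e s3 0 * t2 0 + e s3 1 * t2 1"
  proof -
    have "phi2 g3 = (\<Sum>j<k. Poly_Mapping.lookup (s3 j) 0 * phi2 (G ! j))"
      unfolding s3 by (rule pc(2))
    also have "\<dots> = e s3 0 * t2 0 + e s3 1 * t2 1"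
      by (rule pad) (simp add: t2_def)
    finally show ?thesis .
  qed
  have v3_3: "phi3 g3 = e s3 0 * t3 0 + e s3 1 * t3 1"
  proof -
    have "phi3 g3 = (\<Sum>j<k. Poly_Mapping.lookup (s3 j) 0 * phi3 (G ! j))"
      unfolding s3 by (rule pc(3))
    also have "\<dots> = e s3 0 * t3 0 + e s3 1 * t3 1"
      by (rule pad) (simp add: t3_def)
    finally show ?thesis .
  qed
  have "phi1 g1 * (phi2 g2 * phi3 g3 - phi3 g2 * phi2 g3)
       - phi2 g1 * (phi1 g2 * phi3 g3 - phi3 g2 * phi1 g3)
       + phi3 g1 * (phi1 g2 * phi2 g3 - phi2 g2 * phi1 g3) = 0"
    unfolding v1_1 v1_2 v1_3 v2_1 v2_2 v2_3 v3_1 v3_2 v3_3 by (rule det_rank2)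
  then show False using det_nz unfolding phi_vals by simp
qed

lemma curve_type_ff: "curve_type ff (N + 2) N 3"
  unfolding curve_type_def
proof (intro conjI allI impI)
  show "homogeneous (N + 2) ff" by (rule ff_homogeneous)
  show "reduced3 ff" by (rule ff_reduced)
  show "\<exists>G. length G = 3 \<and> (\<forall>g\<in>set G. homogeneous3 N g \<and> g \<noteq> 0) \<and> gen_module3 G = D0 ff"
    by (rule exI[of _ "[g1,g2,g3]"]) (simp add: gen3 g_hom g_nz)
  show "3 \<le> length G" if "gen_module3 G = D0 ff" for G using minimal that by blast
qed

end


context vector_space_pair
begin

lemma rank_nullity:
  assumes lf: "Vector_Spaces.linear s1 s2 f" and fB: "finite B"
  defines "U \<equiv> vs1.span B"
  shows "vs2.dim (f ` U) + vs1.dim {x \<in> U. f x = 0} = vs1.dim U"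
proof -
  define K where "K = {x \<in> U. f x = 0}"
  obtain C where C: "C \<subseteq> K" "vs1.independent C" "K \<subseteq> vs1.span C" "card C = vs1.dim K"
    using vs1.basis_exists[of K] by blast
  have CU: "C \<subseteq> U" using C(1) K_def by auto
  have finC: "finite C" using vs1.independent_span_bound[OF fB C(2)] CU U_def by blast
  obtain E where E: "C \<subseteq> E" "E \<subseteq> U" "vs1.independent E" "U \<subseteq> vs1.span E"
    using vs1.maximal_independent_subset_extend[OF CU C(2)] by blast
  have finE: "finite E" using vs1.independent_span_bound[OF fB E(3)] E(2) U_def by blast
  have dimU: "vs1.dim U = card E" using vs1.basis_card_eq_dim[OF E(2) E(4) E(3)] by simp
  define D where "D = E - C"
  have finD: "finite D" using finE D_def by simp
  have DU: "D \<subseteq> U" using E(2) D_def by auto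
  have key: "\<forall>d\<in>D. u d = 0" if hu: "(\<Sum>d\<in>D. u d *b f d) = 0" for u
  proof -
    define x where "x = (\<Sum>d\<in>D. u d *a d)"
    have "f x = (\<Sum>d\<in>D. u d *b f d)"
      unfolding x_def by (simp add: linear_sum[OF lf] linear_scale[OF lf])
    then have fx: "f x = 0" using hu by simp
    have "x \<in> U" unfolding x_def U_def
      using DU U_def by (intro vs1.span_sum vs1.span_scale) (auto intro: vs1.span_base)
    then have "x \<in> K" using fx K_def by simp
    then have "x \<in> vs1.span C" using C(3) by blast
    then obtain w where w: "x = (\<Sum>c\<in>C. w c *a c)"
      using vs1.span_finite[OF finC] by blast
    define v where "v = (\<lambda>e. if e \<in> D then u e else - w e)"
    have EDC: "E = D \<union> C" "D \<inter> C = {}" using E(1) D_def by auto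
    have "(\<Sum>e\<in>E. v e *a e) = (\<Sum>e\<in>D. v e *a e) + (\<Sum>e\<in>C. v e *a e)"
      unfolding EDC(1) by (rule sum.union_disjoint) (use finD finC EDC(2) in auto)
    also have "(\<Sum>e\<in>D. v e *a e) = x" unfolding x_def v_def by simp
    also have "(\<Sum>e\<in>C. v e *a e) = - x" unfolding w v_def using EDC(2)
      by (auto simp: sum_negf[symmetric] intro!: sum.cong)
    finally have "(\<Sum>e\<in>E. v e *a e) = 0" by simp
    then have "\<forall>e\<in>E. v e = 0" using vs1.independentD[OF E(3) finE] by blast
    then show ?thesis using D_def v_def by auto
  qed
  have inj: "inj_on f D"
  proof
    fix d1 d2 assume d: "d1 \<in> D" "d2 \<in> D" "f d1 = f d2"
    show "d1 = d2"
    proof (rule ccontr)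
      assume ne: "d1 \<noteq> d2"
      define u where "u = (\<lambda>d. if d = d1 then (1::'a) else if d = d2 then -1 else 0)"
      have "(\<Sum>d\<in>D. u d *b f d) = (\<Sum>d\<in>D. (if d = d1 then f d1 else 0) + (if d = d2 then - f d2 else 0))"
        by (rule sum.cong) (auto simp: u_def ne)
      also have "\<dots> = f d1 - f d2" using d finD by (simp add: sum.distrib)
      also have "\<dots> = 0" using d by simp
      finally have "u d1 = 0" using key d by blast
      then show False by (simp add: u_def)
    qed
  qed
  have indep: "vs2.independent (f ` D)"
  proof (rule vs2.independent_if_scalars_zero)
    show "finite (f ` D)" using finD by simp
    fix g y assume hg: "(\<Sum>y\<in>f ` D. g y *b y) = 0" and y: "y \<in> f ` D"
    have "(\<Sum>d\<in>D. g (f d) *b f d) = 0" using hg sum.reindex[OF inj, of "\<lambda>y. g y *b y"] by simp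
    then show "g y = 0" using key[of "\<lambda>d. g (f d)"] y by auto
  qed
  have sp: "vs2.span (f ` D) = vs2.span (f ` U)"
  proof
    show "vs2.span (f ` D) \<subseteq> vs2.span (f ` U)" using DU by (intro vs2.span_mono) auto
    have "f ` U \<subseteq> vs2.span (f ` D)"
    proof
      fix y assume "y \<in> f ` U"
      then obtain x where x: "x \<in> U" "y = f x" by blast
      then have "x \<in> vs1.span E" using E(4) by blast
      then have "y \<in> vs2.span (f ` E)" using x linear_span_image[OF lf, of E] by blast
      moreover have "f ` E \<subseteq> vs2.span (f ` D)"
      proof
        fix z assume "z \<in> f ` E"
        then obtain e where e: "e \<in> E" "z = f e" by blast
        show "z \<in> vs2.span (f ` D)"
        proof (cases "e \<in> C")
          case True
          then have "f e = 0" using C(1) K_def by auto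
          then show ?thesis using e vs2.span_zero by simp
        next
          case False
          then show ?thesis using e D_def by (auto intro: vs2.span_base)
        qed
      qed
      ultimately show "y \<in> vs2.span (f ` D)" using vs2.span_mono vs2.span_span by blast
    qed
    then show "vs2.span (f ` U) \<subseteq> vs2.span (f ` D)" using vs2.span_minimal vs2.subspace_span by blast
  qed
  have "vs2.dim (f ` U) = card (f ` D)" using vs2.dim_eq_card[OF sp indep] by simp
  also have "\<dots> = card D" using card_image[OF inj] .
  also have "\<dots> = card E - card C" unfolding D_def using E(1) finC by (simp add: card_Diff_subset)
  finally have "vs2.dim (f ` U) = card E - card C" .
  moreover have "card C \<le> card E" using E(1) finE card_mono by blast
  ultimately show ?thesis using C(4) dimU K_def by simp
qed

end


context vector_space_pair
begin

lemma dim_image_inj: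
  assumes lf: "Vector_Spaces.linear s1 s2 f" and fi: "inj_on f (vs1.span S)"
  shows "vs2.dim (f ` S) = vs1.dim S"
proof -
  obtain B where B: "B \<subseteq> S" "vs1.independent B" "S \<subseteq> vs1.span B" "card B = vs1.dim S"
    using vs1.basis_exists[of S] by blast
  have spB: "vs1.span S = vs1.span B"
    using B(1,3) vs1.span_mono[of B S] vs1.span_mono[of S "vs1.span B"] vs1.span_span[of B] by auto
  have "inj_on f B" using fi B(1) vs1.span_superset[of S] inj_on_subset by blast
  then have c: "card (f ` B) = card B" by (rule card_image)
  have ind: "vs2.independent (f ` B)"
    using linear_independent_injective_image[OF lf B(2)] fi spB by simp
  have "vs2.span (f ` B) = vs2.span (f ` S)"
    using linear_span_image[OF lf, of B] linear_span_image[OF lf, of S] spB by simp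
  then have "vs2.dim (f ` S) = card (f ` B)" using vs2.dim_eq_card[OF _ ind] by simp
  then show ?thesis using c B(4) by simp
qed

end

lemma vs_cscale: "vector_space cscale"
  by unfold_locales (simp_all add: cscale_def const3_simps algebra_simps)

definition cscale3 :: "complex \<Rightarrow> mpoly3 \<times> mpoly3 \<times> mpoly3 \<Rightarrow> mpoly3 \<times> mpoly3 \<times> mpoly3" where
  "cscale3 c v = smult3 (const3 c) v"

lemma cscale3_simps:
  "fst (cscale3 c v) = cscale c (fst v)" "fst (snd (cscale3 c v)) = cscale c (fst (snd v))"
  "snd (snd (cscale3 c v)) = cscale c (snd (snd v))"
  by (simp_all add: cscale3_def cscale_def smult3_simps)

lemma vs_cscale3: "vector_space cscale3"
proof unfold_locales
  fix a b :: complex and x y :: "mpoly3 \<times> mpoly3 \<times> mpoly3"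
  show "cscale3 a (x + y) = cscale3 a x + cscale3 a y"
    by (cases x; cases y) (simp add: cscale3_def smult3_def algebra_simps)
  show "cscale3 (a + b) x = cscale3 a x + cscale3 b x"
    by (cases x) (simp add: cscale3_def smult3_def algebra_simps const3_simps)
  show "cscale3 a (cscale3 b x) = cscale3 (a * b) x"
    by (cases x) (simp add: cscale3_def smult3_def algebra_simps const3_simps)
  show "cscale3 1 x = x"
    by (cases x) (simp add: cscale3_def smult3_def const3_simps)
qed

interpretation vsp: vector_space cscale by (rule vs_cscale)
interpretation vsp3: vector_space cscale3 by (rule vs_cscale3)
interpretation vp31: vector_space_pair cscale3 cscale by unfold_locales
interpretation vp33: vector_space_pair cscale3 cscale3 by unfold_locales

section \<open>Monomial counts\<close>

definition mset3 :: "nat \<Rightarrow> mono3 set" where "mset3 k = {m. mono_deg m = k}"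

lemma monos_Suc: "mset3 (Suc k) = (\<lambda>(i,j,l). (Suc i, j, l)) ` mset3 k \<union> (\<lambda>j. (0, j, Suc k - j)) ` {0..Suc k}"
proof (rule set_eqI)
  fix m :: mono3
  obtain i j l where m: "m = (i,j,l)" by (cases m) auto
  show "m \<in> mset3 (Suc k) \<longleftrightarrow> m \<in> (\<lambda>(i,j,l). (Suc i, j, l)) ` mset3 k \<union> (\<lambda>j. (0, j, Suc k - j)) ` {0..Suc k}"
  proof
    assume "m \<in> mset3 (Suc k)"
    then have d: "i + j + l = Suc k" by (simp add: mset3_def mono_deg_def m)
    show "m \<in> (\<lambda>(i,j,l). (Suc i, j, l)) ` mset3 k \<union> (\<lambda>j. (0, j, Suc k - j)) ` {0..Suc k}"
    proof (cases i)
      case 0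
      then have "m = (0, j, Suc k - j)" "j \<in> {0..Suc k}" using d m by auto
      then show ?thesis by blast
    next
      case (Suc i')
      then have "m = (\<lambda>(i,j,l). (Suc i, j, l)) (i', j, l)" "(i',j,l) \<in> mset3 k"
        using d m by (auto simp: mset3_def mono_deg_def)
      then show ?thesis by blast
    qed
  next
    assume "m \<in> (\<lambda>(i,j,l). (Suc i, j, l)) ` mset3 k \<union> (\<lambda>j. (0, j, Suc k - j)) ` {0..Suc k}"
    then show "m \<in> mset3 (Suc k)" by (auto simp: mset3_def mono_deg_def)
  qed
qed

lemma finite_monos: "finite (mset3 k)"
proof (induction k)
  case 0
  have "mset3 0 = {(0,0,0)}" by (auto simp: mset3_def mono_deg_def)
  then show ?case by simp
next
  case (Suc k) then show ?case by (simp add: monos_Suc)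
qed

lemma card_monos: "2 * card (mset3 k) = (k + 1) * (k + 2)"
proof (induction k)
  case 0
  have "mset3 0 = {(0,0,0)}" by (auto simp: mset3_def mono_deg_def)
  then show ?case by simp
next
  case (Suc k)
  have c1: "card ((\<lambda>(i::nat,j::nat,l::nat). (Suc i, j, l)) ` mset3 k) = card (mset3 k)"
    by (rule card_image) (auto simp: inj_on_def)
  have c2: "card ((\<lambda>j. (0::nat, j, Suc k - j)) ` {0..Suc k}) = Suc k + 1"
    by (subst card_image) (auto simp: inj_on_def)
  have disj: "(\<lambda>(i::nat,j::nat,l::nat). (Suc i, j, l)) ` mset3 k \<inter> (\<lambda>j. (0, j, Suc k - j)) ` {0..Suc k} = {}" by auto
  have "card (mset3 (Suc k)) = card ((\<lambda>(i::nat,j::nat,l::nat). (Suc i, j, l)) ` mset3 k) + card ((\<lambda>j. (0::nat, j, Suc k - j)) ` {0..Suc k})"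
    unfolding monos_Suc by (rule card_Un_disjoint) (use disj finite_monos in auto)
  then have "card (mset3 (Suc k)) = card (mset3 k) + (Suc k + 1)" using c1 c2 by simp
  then show ?case using Suc by (simp add: algebra_simps)
qed

section \<open>Dimension of the homogeneous pieces\<close>

lemma lookup_cscale: "Poly_Mapping.lookup (cscale c p) m = c * Poly_Mapping.lookup p m"
  by (simp add: cscale_def lookup_const3_mult)

lemma cscale_single: "cscale c (Poly_Mapping.single m 1) = Poly_Mapping.single m c"
  by (simp add: cscale_def const3_single)

definition "Bk k = (\<lambda>m. Poly_Mapping.single m (1::complex)) ` mset3 k"

lemma inj_single1: "inj (\<lambda>m. Poly_Mapping.single m (1::complex))"
  by (rule injI) (metis lookup_single_eq lookup_single_not_eq zero_neq_one)

lemma single1_eq_iff[simp]: "Poly_Mapping.single a (1::complex) = Poly_Mapping.single b 1 \<longleftrightarrow> a = b"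
  using inj_single1 by (auto simp: inj_def)

lemma finite_Bk: "finite (Bk k)" by (simp add: Bk_def finite_monos)
lemma card_Bk: "card (Bk k) = card (mset3 k)"
  unfolding Bk_def by (rule card_image, rule inj_on_subset[OF inj_single1], simp)

lemma Bk_indep: "vsp.independent (Bk k)"
proof (rule vsp.independent_if_scalars_zero[OF finite_Bk])
  fix g x assume h: "(\<Sum>x\<in>Bk k. cscale (g x) x) = 0" and x: "x \<in> Bk k"
  then obtain m where m: "m \<in> mset3 k" "x = Poly_Mapping.single m 1" by (auto simp: Bk_def)
  have "0 = Poly_Mapping.lookup (\<Sum>x\<in>Bk k. cscale (g x) x) m" using h by simp
  also have "\<dots> = (\<Sum>y\<in>Bk k. g y * Poly_Mapping.lookup y m)" by (simp add: lookup_sum lookup_cscale)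
  also have "\<dots> = (\<Sum>y\<in>Bk k. if y = x then g x else 0)"
  proof (rule sum.cong[OF refl])
    fix y assume "y \<in> Bk k"
    then obtain m' where "y = Poly_Mapping.single m' 1" by (auto simp: Bk_def)
    then show "g y * Poly_Mapping.lookup y m = (if y = x then g x else 0)"
      using m inj_single1 by (auto simp: lookup_single when_def inj_def)
  qed
  also have "\<dots> = g x" using x finite_Bk by simp
  finally show "g x = 0" by simp
qed

lemma S_deg_subspace: "vsp.subspace (S_deg k)"
  unfolding vsp.subspace_def S_deg_def
  by (auto intro: homogeneous_add simp: cscale_def homogeneous_const3_mult)

lemma S_deg_span: "S_deg k = vsp.span (Bk k)"
proof
  show "vsp.span (Bk k) \<subseteq> S_deg k"
    by (rule vsp.span_minimal[OF _ S_deg_subspace]) (auto simp: Bk_def S_deg_def mset3_def intro: homogeneous_single)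
  show "S_deg k \<subseteq> vsp.span (Bk k)"
  proof
    fix p assume "p \<in> S_deg k"
    then have hk: "\<And>m. m \<in> Poly_Mapping.keys p \<Longrightarrow> m \<in> mset3 k" by (simp add: S_deg_def homogeneous_def mset3_def)
    have "p = (\<Sum>m\<in>Poly_Mapping.keys p. cscale (Poly_Mapping.lookup p m) (Poly_Mapping.single m 1))"
      by (subst poly_sum_single) (simp add: cscale_single)
    also have "\<dots> \<in> vsp.span (Bk k)"
      using hk by (intro vsp.span_sum vsp.span_scale vsp.span_base) (auto simp: Bk_def)
    finally show "p \<in> vsp.span (Bk k)" .
  qed
qed

lemma dim_S_deg: "vsp.dim (S_deg k) = card (mset3 k)"
proof -
  have "vsp.span (Bk k) = vsp.span (S_deg k)" by (simp add: S_deg_span vsp.span_span)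
  then show ?thesis using vsp.dim_eq_card[OF _ Bk_indep] card_Bk by simp
qed

definition "S3 k = {v. homogeneous3 k v}"

definition "B3 k = (\<lambda>b. (b, 0, 0)) ` Bk k \<union> (\<lambda>b. (0, b, 0)) ` Bk k \<union> (\<lambda>b. (0, 0, b)) ` Bk k"

lemma Bk_nz: "b \<in> Bk k \<Longrightarrow> b \<noteq> 0"
  by (auto simp: Bk_def) (metis lookup_single_eq lookup_zero zero_neq_one)

lemma finite_B3: "finite (B3 k)" by (simp add: B3_def finite_Bk)

lemma card_B3: "card (B3 k) = 3 * card (mset3 k)"
proof -
  have i: "inj_on (\<lambda>b. (b, 0::mpoly3, 0::mpoly3)) (Bk k)" "inj_on (\<lambda>b. (0::mpoly3, b, 0::mpoly3)) (Bk k)"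
    "inj_on (\<lambda>b. (0::mpoly3, 0::mpoly3, b)) (Bk k)" by (auto simp: inj_on_def)
  have d1: "(\<lambda>b. (b, 0::mpoly3, 0::mpoly3)) ` Bk k \<inter> (\<lambda>b. (0, b, 0)) ` Bk k = {}" using Bk_nz by auto
  have d2: "((\<lambda>b. (b, 0::mpoly3, 0::mpoly3)) ` Bk k \<union> (\<lambda>b. (0, b, 0)) ` Bk k) \<inter> (\<lambda>b. (0, 0, b)) ` Bk k = {}"
    using Bk_nz by auto
  show ?thesis unfolding B3_def
    by (simp add: card_Un_disjoint[OF _ _ d2] card_Un_disjoint[OF _ _ d1] finite_Bk card_image[OF i(1)]
        card_image[OF i(2)] card_image[OF i(3)] card_Bk)
qed

lemma B3_indep: "vsp3.independent (B3 k)"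
proof (rule vsp3.independent_if_scalars_zero[OF finite_B3])
  fix g x assume h: "(\<Sum>x\<in>B3 k. cscale3 (g x) x) = 0" and x: "x \<in> B3 k"
  have f: "(\<Sum>y\<in>B3 k. cscale (g y) (fst y)) = 0" "(\<Sum>y\<in>B3 k. cscale (g y) (fst (snd y))) = 0"
     "(\<Sum>y\<in>B3 k. cscale (g y) (snd (snd y))) = 0"
    using arg_cong[OF h, of fst] arg_cong[OF h, of "\<lambda>v. fst (snd v)"] arg_cong[OF h, of "\<lambda>v. snd (snd v)"]
    by (simp_all add: sel_sum cscale3_simps)
  have gen: "g x = 0" if sel: "sel x = Poly_Mapping.single m 1" "m \<in> mset3 k"
     and f0: "(\<Sum>y\<in>B3 k. cscale (g y) (sel y)) = 0"
     and uniq: "\<And>y. y \<in> B3 k \<Longrightarrow> Poly_Mapping.lookup (sel y) m = (if y = x then 1 else 0)" for sel m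
  proof -
    have "0 = Poly_Mapping.lookup (\<Sum>y\<in>B3 k. cscale (g y) (sel y)) m" using f0 by simp
    also have "\<dots> = (\<Sum>y\<in>B3 k. g y * Poly_Mapping.lookup (sel y) m)" by (simp add: lookup_sum lookup_cscale)
    also have "\<dots> = (\<Sum>y\<in>B3 k. if y = x then g x else 0)" by (rule sum.cong[OF refl]) (simp add: uniq)
    also have "\<dots> = g x" using x finite_B3 by simp
    finally show ?thesis by simp
  qed
  have lk: "Poly_Mapping.lookup (Poly_Mapping.single m' 1) m = (if m' = m then 1 else (0::complex))" for m m'
    by (simp add: lookup_single when_def)
  from x consider (a) m where "m \<in> mset3 k" "x = (Poly_Mapping.single m 1, 0, 0)"
    | (b) m where "m \<in> mset3 k" "x = (0, Poly_Mapping.single m 1, 0)"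
    | (c) m where "m \<in> mset3 k" "x = (0, 0, Poly_Mapping.single m 1)"
    by (auto simp: B3_def Bk_def)
  then show "g x = 0"
  proof cases
    case a
    show ?thesis by (rule gen[of fst m]) (use a f in \<open>auto simp: B3_def Bk_def lk split: if_splits\<close>)
  next
    case b
    show ?thesis by (rule gen[of "\<lambda>v. fst (snd v)" m]) (use b f in \<open>auto simp: B3_def Bk_def lk split: if_splits\<close>)
  next
    case c
    show ?thesis by (rule gen[of "\<lambda>v. snd (snd v)" m]) (use c f in \<open>auto simp: B3_def Bk_def lk split: if_splits\<close>)
  qed
qed

lemma S3_subspace: "vsp3.subspace (S3 k)"
  unfolding vsp3.subspace_def S3_def
  by (auto simp: homogeneous3_def zero_prod_def cscale3_def smult3_def split: prod.splits
      intro: homogeneous_add homogeneous_const3_mult)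

lemma S3_span: "S3 k = vsp3.span (B3 k)"
proof
  show "vsp3.span (B3 k) \<subseteq> S3 k"
    by (rule vsp3.span_minimal[OF _ S3_subspace])
      (auto simp: B3_def Bk_def S3_def mset3_def homogeneous3_def intro: homogeneous_single)
  show "S3 k \<subseteq> vsp3.span (B3 k)"
  proof
    fix v assume v: "v \<in> S3 k"
    obtain a b c where vabc: "v = (a,b,c)" by (cases v) auto
    have hom: "a \<in> S_deg k" "b \<in> S_deg k" "c \<in> S_deg k" using v vabc by (auto simp: S3_def homogeneous3_def S_deg_def)
    have l1: "(\<lambda>p. (p, 0::mpoly3, 0::mpoly3)) ` vsp.span (Bk k) \<subseteq> vsp3.span (B3 k)"
    proof -
      have lin: "Vector_Spaces.linear cscale cscale3 (\<lambda>p. (p, 0::mpoly3, 0::mpoly3))"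
        by unfold_locales (auto simp: cscale3_def smult3_def cscale_def)
      interpret vector_space_pair cscale cscale3 by unfold_locales
      have "(\<lambda>p. (p, 0::mpoly3, 0::mpoly3)) ` vsp.span (Bk k) = vsp3.span ((\<lambda>p. (p, 0, 0)) ` Bk k)"
        using linear_span_image[OF lin] by simp
      also have "\<dots> \<subseteq> vsp3.span (B3 k)" by (rule vsp3.span_mono) (auto simp: B3_def)
      finally show ?thesis .
    qed
    have l2: "(\<lambda>p. (0::mpoly3, p, 0::mpoly3)) ` vsp.span (Bk k) \<subseteq> vsp3.span (B3 k)"
    proof -
      have lin: "Vector_Spaces.linear cscale cscale3 (\<lambda>p. (0::mpoly3, p, 0::mpoly3))"
        by unfold_locales (auto simp: cscale3_def smult3_def cscale_def)
      interpret vector_space_pair cscale cscale3 by unfold_locales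
      have "(\<lambda>p. (0::mpoly3, p, 0::mpoly3)) ` vsp.span (Bk k) = vsp3.span ((\<lambda>p. (0, p, 0)) ` Bk k)"
        using linear_span_image[OF lin] by simp
      also have "\<dots> \<subseteq> vsp3.span (B3 k)" by (rule vsp3.span_mono) (auto simp: B3_def)
      finally show ?thesis .
    qed
    have l3: "(\<lambda>p. (0::mpoly3, 0::mpoly3, p)) ` vsp.span (Bk k) \<subseteq> vsp3.span (B3 k)"
    proof -
      have lin: "Vector_Spaces.linear cscale cscale3 (\<lambda>p. (0::mpoly3, 0::mpoly3, p))"
        by unfold_locales (auto simp: cscale3_def smult3_def cscale_def)
      interpret vector_space_pair cscale cscale3 by unfold_locales
      have "(\<lambda>p. (0::mpoly3, 0::mpoly3, p)) ` vsp.span (Bk k) = vsp3.span ((\<lambda>p. (0, 0, p)) ` Bk k)"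
        using linear_span_image[OF lin] by simp
      also have "\<dots> \<subseteq> vsp3.span (B3 k)" by (rule vsp3.span_mono) (auto simp: B3_def)
      finally show ?thesis .
    qed
    have "(a,0,0) \<in> vsp3.span (B3 k)" "(0,b,0) \<in> vsp3.span (B3 k)" "(0,0,c) \<in> vsp3.span (B3 k)"
      using l1 l2 l3 hom S_deg_span by auto
    then have "(a,0,0) + (0,b,0) + (0,0,c) \<in> vsp3.span (B3 k)" by (intro vsp3.span_add)
    then show "v \<in> vsp3.span (B3 k)" by (simp add: vabc)
  qed
qed

lemma dim_S3: "vsp3.dim (S3 k) = 3 * card (mset3 k)"
proof -
  have "vsp3.span (B3 k) = vsp3.span (S3 k)" by (simp add: S3_span vsp3.span_span)
  then show ?thesis using vsp3.dim_eq_card[OF _ B3_indep] card_B3 by simp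
qed


lemma lookup_single_mult_shift:
  "Poly_Mapping.lookup (Poly_Mapping.single e c * a) (e + m) = c * Poly_Mapping.lookup (a::mpoly3) m"
proof (induction a rule: poly_induct)
  case zero then show ?case by simp
next
  case (single b d) then show ?case by (simp add: mult_single lookup_single when_def)
next
  case (add p q) then show ?case by (simp add: distrib_left lookup_add)
qed

lemma hom_div:
  assumes "homogeneous (i + 1) (Poly_Mapping.single e 1 * a)" "mono_deg e = 1"
  shows "homogeneous i a"
  unfolding homogeneous_def
proof
  fix m assume "m \<in> Poly_Mapping.keys a"
  then have "Poly_Mapping.lookup (Poly_Mapping.single e 1 * a) (e + m) \<noteq> 0"
    by (simp add: lookup_single_mult_shift in_keys_iff)
  then have "e + m \<in> Poly_Mapping.keys (Poly_Mapping.single e 1 * a)" by (simp add: in_keys_iff)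
  then have "mono_deg (e + m) = i + 1" using assms(1) by (simp add: homogeneous_def)
  then show "mono_deg m = i" using assms(2) by (simp add: mono_deg_add)
qed

lemma restr_deg_mult:
  assumes g: "homogeneous e g"
  shows "restr (\<lambda>m. mono_deg m = j + e) (a * g) = restr (\<lambda>m. mono_deg m = j) a * g"
proof (induction a rule: poly_induct)
  case zero then show ?case by simp
next
  case (single m c)
  have keys: "mono_deg k = mono_deg m + e" if kk: "k \<in> Poly_Mapping.keys (Poly_Mapping.single m c * g)" for k
  proof -
    obtain k' where "k' \<in> Poly_Mapping.keys g" "k = m + k'" using keys_single_mult[of m c g] kk by blast
    then show ?thesis using g by (simp add: mono_deg_add homogeneous_def)
  qed
  show ?case
  proof (cases "mono_deg m = j")
    case True
    then show ?thesis by (simp add: restr_single) (rule restr_id, use keys True in simp)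
  next
    case False
    then show ?thesis by (simp add: restr_single) (rule restr_eq_0, use keys False in simp)
  qed
next
  case (add p q) then show ?case by (simp add: distrib_right restr_add)
qed

lemma homogeneous_restr: "homogeneous j (restr (\<lambda>m. mono_deg m = j) a)"
  using keys_restr[of "\<lambda>m. mono_deg m = j" a] by (auto simp: homogeneous_def)

lemma restr_hom_id: "homogeneous k p \<Longrightarrow> restr (\<lambda>m. mono_deg m = k) p = p"
  by (rule restr_id) (simp add: homogeneous_def)

lemma const3_mult_eq_0: "c \<noteq> 0 \<Longrightarrow> const3 c * p = 0 \<Longrightarrow> p = 0"
proof -
  assume c: "c \<noteq> 0" and h: "const3 c * p = 0"
  have "p = (const3 (inverse c) * const3 c) * p" using const3_inv[OF c] by (simp add: mult.commute)
  also have "\<dots> = 0" using h by (simp add: mult.assoc)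
  finally show "p = 0" .
qed

context fc
begin

definition "Phi v = fst v * pdX ff + fst (snd v) * pdY ff + snd (snd v) * pdZ ff"
definition "Psi v = fst v * XX + fst (snd v) * YY + snd (snd v) * ZZ"
definition "k1 = const3 (inverse nnc)"
definition "k2 = const3 (inverse (nnc + 3))"
definition "nnp = (of_nat N - 1 :: mpoly3)"
definition "rho v = (let T = k2 * (fst v + fst (snd v) + snd (snd v)) in
   (varX * (k1 * (fst v - T)), varY * (k1 * (fst (snd v) - T)), varZ * (k1 * (snd (snd v) - T))))"

lemma nnc_nz: "nnc \<noteq> 0" using N3 by (simp add: nnc_def)
lemma nnc3_nz: "nnc + 3 \<noteq> 0"
proof -
  have "nnc + 3 = of_nat (N + 2)" by (simp add: nnc_def)
  then show ?thesis by (metis of_nat_eq_0_iff add_eq_0_iff_both_eq_0 zero_neq_numeral)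
qed
lemma nnp_const: "nnp = const3 nnc" by (simp add: nnp_def nnc_def const3_simps)
lemma k1_inv: "k1 * nnp = 1" by (simp add: k1_def nnp_const mult.commute const3_inv nnc_nz)
lemma k2_inv: "k2 * (nnp + 3) = 1"
proof -
  have "nnp + 3 = const3 (nnc + 3)" by (simp add: nnp_const const3_simps)
  then show ?thesis by (simp add: k2_def mult.commute const3_inv nnc3_nz)
qed

lemma lin_Phi: "Vector_Spaces.linear cscale3 cscale Phi"
  by unfold_locales (auto simp: Phi_def cscale3_simps cscale_def algebra_simps)
lemma lin_Psi: "Vector_Spaces.linear cscale3 cscale Psi"
  by unfold_locales (auto simp: Psi_def cscale3_simps cscale_def algebra_simps)
lemma lin_rho: "Vector_Spaces.linear cscale3 cscale3 rho"
proof unfold_locales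
  fix x y :: "mpoly3 \<times> mpoly3 \<times> mpoly3" and c :: complex
  show "rho (x + y) = rho x + rho y"
    by (cases x; cases y) (simp add: rho_def Let_def algebra_simps)
  show "rho (cscale3 c x) = cscale3 c (rho x)"
    by (cases x) (simp add: rho_def Let_def cscale3_def smult3_def algebra_simps)
qed

lemma hom_pd: "homogeneous (N+1) (pdX ff)" "homogeneous (N+1) (pdY ff)" "homogeneous (N+1) (pdZ ff)"
proof -
  have h1: "homogeneous 1 varX" "homogeneous 1 varY" "homogeneous 1 varZ"
    by (simp_all add: varX_mon varY_mon varZ_mon homogeneous_mon)
  have hX: "homogeneous (N-1) XX" "homogeneous (N-1) YY" "homogeneous (N-1) ZZ"
    by (simp_all add: XX_def YY_def ZZ_def homogeneous_mon)
  have hA: "homogeneous (N-1) AA" "homogeneous (N-1) BB" "homogeneous (N-1) CC"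
    unfolding AA_def BB_def CC_def using hX by (auto intro!: homogeneous_add homogeneous_of_nat_mult)
  have e: "1 + 1 + (N - 1) = N + 1" using N3 by simp
  show "homogeneous (N+1) (pdX ff)" "homogeneous (N+1) (pdY ff)" "homogeneous (N+1) (pdZ ff)"
    unfolding pdX_ff' pdY_ff' pdZ_ff' e[symmetric]
    by (intro homogeneous_mult h1 hA)+
qed

lemma Phi_image: "Phi ` S3 j = jacobian_ideal ff \<inter> S_deg (j + (N+1))"
proof
  show "Phi ` S3 j \<subseteq> jacobian_ideal ff \<inter> S_deg (j + (N+1))"
  proof
    fix p assume "p \<in> Phi ` S3 j"
    then obtain v where v: "v \<in> S3 j" "p = Phi v" by blast
    obtain a b c where vabc: "v = (a,b,c)" by (cases v) auto
    have h: "homogeneous j a" "homogeneous j b" "homogeneous j c" using v vabc by (auto simp: S3_def homogeneous3_def)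
    have "homogeneous (j + (N+1)) p" unfolding v Phi_def vabc fst_conv snd_conv
      using homogeneous_mult[OF h(1) hom_pd(1)] homogeneous_mult[OF h(2) hom_pd(2)] homogeneous_mult[OF h(3) hom_pd(3)]
      by (intro homogeneous_add)
    moreover have "p \<in> jacobian_ideal ff" unfolding v Phi_def vabc jacobian_ideal_def by auto
    ultimately show "p \<in> jacobian_ideal ff \<inter> S_deg (j + (N+1))" by (simp add: S_deg_def)
  qed
  show "jacobian_ideal ff \<inter> S_deg (j + (N+1)) \<subseteq> Phi ` S3 j"
  proof
    fix p assume p: "p \<in> jacobian_ideal ff \<inter> S_deg (j + (N+1))"
    then obtain a b c where abc: "p = a * pdX ff + b * pdY ff + c * pdZ ff" by (auto simp: jacobian_ideal_def)
    let ?r = "restr (\<lambda>m. mono_deg m = j)"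
    have "p = restr (\<lambda>m. mono_deg m = j + (N+1)) p" using p by (simp add: restr_hom_id S_deg_def)
    also have "\<dots> = ?r a * pdX ff + ?r b * pdY ff + ?r c * pdZ ff"
      unfolding abc restr_add restr_deg_mult[OF hom_pd(1)] restr_deg_mult[OF hom_pd(2)] restr_deg_mult[OF hom_pd(3)] ..
    also have "\<dots> = Phi (?r a, ?r b, ?r c)" by (simp add: Phi_def)
    finally show "p \<in> Phi ` S3 j"
      by (rule image_eqI) (simp add: S3_def homogeneous3_def homogeneous_restr)
  qed
qed

lemma Phi_kernel: "{v \<in> S3 j. Phi v = 0} = D0 ff \<inter> S3 j"
proof -
  have "Phi v = 0 \<longleftrightarrow> v \<in> D0 ff" for v by (cases v) (simp add: D0_def Phi_def)
  then show ?thesis by blast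
qed

lemma rho_inj0: "rho v = 0 \<Longrightarrow> v = 0"
proof -
  assume h: "rho v = 0"
  obtain a b c where vabc: "v = (a,b,c)" by (cases v) auto
  define T where "T = k2 * (a + b + c)"
  have nzX: "varX \<noteq> 0" "varY \<noteq> 0" "varZ \<noteq> 0" by (simp_all add: varX_mon varY_mon varZ_mon mon_nz)
  have k1nz: "inverse nnc \<noteq> 0" using nnc_nz by simp
  have rv: "rho v = (varX * (k1 * (a - T)), varY * (k1 * (b - T)), varZ * (k1 * (c - T)))"
    by (simp add: rho_def vabc T_def Let_def)
  have "varX * (k1 * (a - T)) = 0" "varY * (k1 * (b - T)) = 0" "varZ * (k1 * (c - T)) = 0"
    using h unfolding rv by (simp_all add: zero_prod_def)
  then have z: "const3 (inverse nnc) * (a - T) = 0" "const3 (inverse nnc) * (b - T) = 0"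
    "const3 (inverse nnc) * (c - T) = 0" using nzX by (simp_all add: k1_def)
  have "a - T = 0" "b - T = 0" "c - T = 0"
    by (rule const3_mult_eq_0[OF k1nz z(1)], rule const3_mult_eq_0[OF k1nz z(2)], rule const3_mult_eq_0[OF k1nz z(3)])
  then have e: "a = T" "b = T" "c = T" by simp_all
  have "(nnp + 3) * T = (k2 * (nnp + 3)) * (a + b + c)" unfolding T_def by (simp only: ac_simps)
  also have "\<dots> = a + b + c" unfolding k2_inv by simp
  also have "\<dots> = 3 * T" unfolding e by simp
  finally have "nnp * T + 3 * T = 0 + 3 * T" by (simp only: distrib_right add_0_left)
  then have "nnp * T = 0" by (rule add_right_imp_eq)
  then have "T = 0" unfolding nnp_const by (rule const3_mult_eq_0[OF nnc_nz])
  then show "v = 0" using e vabc by (simp add: zero_prod_def)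
qed

lemma rho_inj: "inj_on rho S"
proof (rule inj_onI)
  fix x y assume "rho x = rho y"
  then have "rho (x - y) = 0"
    using vp33.linear_diff[OF lin_rho] by simp
  then have "x - y = 0" by (rule rho_inj0)
  then show "x = y" by simp
qed

lemma Psi_rho: "Psi v = 0 \<Longrightarrow> rho v \<in> D0 ff"
proof -
  assume h: "Psi v = 0"
  obtain a b c where vabc: "v = (a,b,c)" by (cases v) auto
  define T where "T = k2 * (a + b + c)"
  define a' where "a' = k1 * (a - T)"
  define b' where "b' = k1 * (b - T)"
  define c' where "c' = k1 * (c - T)"
  have r: "rho v = (varX * a', varY * b', varZ * c')" by (simp add: rho_def vabc Let_def T_def a'_def b'_def c'_def)
  have "(nnp + 3) * T = (k2 * (nnp + 3)) * (a + b + c)" unfolding T_def by (simp only: ac_simps)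
  also have "\<dots> = a + b + c" unfolding k2_inv by simp
  finally have sT: "(nnp + 3) * T = a + b + c" .
  have na: "nnp * a' = a - T" "nnp * b' = b - T" "nnp * c' = c - T"
    unfolding a'_def b'_def c'_def using k1_inv by (simp_all add: algebra_simps)
  have t3: "(3::mpoly3) * T = T + T + T"
  proof -
    have "(3::mpoly3) = 1 + 1 + 1" by simp
    then show ?thesis by (simp add: distrib_right)
  qed
  have "nnp * (a' + b' + c') = (a - T) + (b - T) + (c - T)" using na by (simp add: distrib_left)
  also have "\<dots> = (a + b + c) - (T + T + T)" by (simp add: algebra_simps)
  also have "\<dots> = nnp * T" unfolding sT[symmetric] t3[symmetric] by (simp add: algebra_simps)
  finally have "nnp * (a' + b' + c') = nnp * T" .
  then have "k1 * (nnp * (a' + b' + c')) = k1 * (nnp * T)" by simp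
  then have sum': "a' + b' + c' = T" using k1_inv by (simp add: mult.assoc[symmetric])
  have AA': "AA = nnp * XX + (XX + YY + ZZ)" by (simp add: AA_def nnp_def algebra_simps)
  have BB': "BB = nnp * YY + (XX + YY + ZZ)" by (simp add: BB_def nnp_def algebra_simps)
  have CC': "CC = nnp * ZZ + (XX + YY + ZZ)" by (simp add: CC_def nnp_def algebra_simps)
  have "a' * AA + b' * BB + c' * CC = (nnp * a') * XX + (nnp * b') * YY + (nnp * c') * ZZ + (a' + b' + c') * (XX + YY + ZZ)"
    unfolding AA' BB' CC' by (simp add: algebra_simps)
  also have "\<dots> = Psi v" unfolding na sum' by (simp add: Psi_def vabc algebra_simps)
  finally have "a' * AA + b' * BB + c' * CC = 0" using h by simp
  moreover have "varX * a' * pdX ff + varY * b' * pdY ff + varZ * c' * pdZ ff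
     = (varX * varY * varZ) * (a' * AA + b' * BB + c' * CC)"
    unfolding pdX_ff' pdY_ff' pdZ_ff' by (simp add: algebra_simps)
  ultimately show ?thesis unfolding r D0_def by simp
qed

end


lemma hilb_arith:
  fixes sk sj si s3 dJ dK i N :: nat
  assumes "2 * sk = (i + N + 2 + 1) * (i + N + 2 + 2)" "2 * sj = (i + 1 + 1) * (i + 1 + 2)"
    "2 * si = (i + 1) * (i + 2)" "2 * s3 = (i + (N - 1) + 1) * (i + (N - 1) + 2)"
    "dJ + dK = 3 * sj" "s3 + dK = 3 * si" "N \<ge> 1"
  shows "sk - dJ = 3 * N"
proof -
  obtain M where M: "N = M + 1" using assms(7) by (metis add.commute le_Suc_ex)
  have "2 * sk = 2 * dJ + 6 * N" using assms unfolding M by (simp add: algebra_simps)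
  then show ?thesis by simp
qed

context fc
begin

lemma hom_varX_mult: "homogeneous i a \<Longrightarrow> homogeneous (i+1) (varX * a)"
  using homogeneous_mult[of 1 varX i a] by (simp add: varX_mon homogeneous_mon add.commute)
lemma hom_varY_mult: "homogeneous i a \<Longrightarrow> homogeneous (i+1) (varY * a)"
  using homogeneous_mult[of 1 varY i a] by (simp add: varY_mon homogeneous_mon add.commute)
lemma hom_varZ_mult: "homogeneous i a \<Longrightarrow> homogeneous (i+1) (varZ * a)"
  using homogeneous_mult[of 1 varZ i a] by (simp add: varZ_mon homogeneous_mon add.commute)

lemma hom_k: "homogeneous i a \<Longrightarrow> homogeneous i (k1 * a)" "homogeneous i a \<Longrightarrow> homogeneous i (k2 * a)"
   "homogeneous i a \<Longrightarrow> homogeneous i (nnp * a)"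
  by (simp_all add: k1_def k2_def nnp_const homogeneous_const3_mult)

lemma rho_image: "rho ` {v \<in> S3 i. Psi v = 0} = D0 ff \<inter> S3 (i+1)"
proof
  show "rho ` {v \<in> S3 i. Psi v = 0} \<subseteq> D0 ff \<inter> S3 (i+1)"
  proof
    fix w assume "w \<in> rho ` {v \<in> S3 i. Psi v = 0}"
    then obtain v where v: "v \<in> S3 i" "Psi v = 0" "w = rho v" by blast
    obtain a b c where vabc: "v = (a,b,c)" by (cases v) auto
    have h: "homogeneous i a" "homogeneous i b" "homogeneous i c" using v vabc by (auto simp: S3_def homogeneous3_def)
    have hT: "homogeneous i (k2 * (a + b + c))" using h by (intro hom_k homogeneous_add)
    have "homogeneous (i+1) (varX * (k1 * (a - k2 * (a + b + c))))"
      "homogeneous (i+1) (varY * (k1 * (b - k2 * (a + b + c))))"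
      "homogeneous (i+1) (varZ * (k1 * (c - k2 * (a + b + c))))"
      by (intro hom_varX_mult hom_varY_mult hom_varZ_mult hom_k homogeneous_diff h hT)+
    then have "w \<in> S3 (i+1)" unfolding v vabc rho_def Let_def S3_def homogeneous3_def
      by simp
    then show "w \<in> D0 ff \<inter> S3 (i+1)" using Psi_rho v by simp
  qed
  show "D0 ff \<inter> S3 (i+1) \<subseteq> rho ` {v \<in> S3 i. Psi v = 0}"
  proof
    fix w assume w: "w \<in> D0 ff \<inter> S3 (i+1)"
    obtain a b c where wabc: "w = (a,b,c)" by (cases w) auto
    obtain a' b' c' where abc: "a = varX * a'" "b = varY * b'" "c = varZ * c'"
      and syz: "a' * AA + b' * BB + c' * CC = 0"
      using D0_div w wabc by blast
    have h1: "homogeneous (i+1) a" "homogeneous (i+1) b" "homogeneous (i+1) c"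
      using w wabc by (auto simp: S3_def homogeneous3_def)
    have ha: "homogeneous i a'"
      by (rule hom_div[of i "(1,0,0)"]) (use h1 abc in \<open>simp_all add: varX_def mono_deg_def\<close>)
    have hb: "homogeneous i b'"
      by (rule hom_div[of i "(0,1,0)"]) (use h1 abc in \<open>simp_all add: varY_def mono_deg_def\<close>)
    have hc: "homogeneous i c'"
      by (rule hom_div[of i "(0,0,1)"]) (use h1 abc in \<open>simp_all add: varZ_def mono_deg_def\<close>)
    note h = ha hb hc
    define T where "T = a' + b' + c'"
    define v where "v = (nnp * a' + T, nnp * b' + T, nnp * c' + T)"
    have vS: "v \<in> S3 i" unfolding v_def S3_def homogeneous3_def T_def
      using h by (auto intro!: homogeneous_add hom_k)
    have AA': "AA = nnp * XX + (XX + YY + ZZ)" by (simp add: AA_def nnp_def algebra_simps)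
    have BB': "BB = nnp * YY + (XX + YY + ZZ)" by (simp add: BB_def nnp_def algebra_simps)
    have CC': "CC = nnp * ZZ + (XX + YY + ZZ)" by (simp add: CC_def nnp_def algebra_simps)
    have "Psi v = a' * AA + b' * BB + c' * CC"
      unfolding Psi_def v_def AA' BB' CC' T_def by (simp add: algebra_simps)
    then have vK: "Psi v = 0" using syz by simp
    have t3: "(3::mpoly3) * T = T + T + T"
    proof -
      have "(3::mpoly3) = 1 + 1 + 1" by simp
      then show ?thesis by (simp add: distrib_right)
    qed
    have "(nnp * a' + T) + (nnp * b' + T) + (nnp * c' + T) = (nnp + 3) * T"
      unfolding T_def[symmetric] distrib_right t3 by (simp add: T_def algebra_simps)
    then have "k2 * ((nnp * a' + T) + (nnp * b' + T) + (nnp * c' + T)) = (k2 * (nnp + 3)) * T"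
      by (simp add: mult.assoc)
    then have TT: "k2 * ((nnp * a' + T) + (nnp * b' + T) + (nnp * c' + T)) = T" unfolding k2_inv by simp
    have k1a: "k1 * (nnp * u) = u" for u using k1_inv by (simp add: mult.assoc[symmetric])
    have "rho v = w" unfolding rho_def Let_def v_def fst_conv snd_conv TT
      by (simp add: k1a wabc abc)
    then show "w \<in> rho ` {v \<in> S3 i. Psi v = 0}" using vS vK by blast
  qed
qed

lemma Psi_image:
  assumes i: "i + 4 \<ge> 2 * N"
  shows "Psi ` S3 i = S_deg (i + (N-1))"
proof
  show "Psi ` S3 i \<subseteq> S_deg (i + (N-1))"
  proof
    fix p assume "p \<in> Psi ` S3 i"
    then obtain v where v: "v \<in> S3 i" "p = Psi v" by blast
    obtain a b c where vabc: "v = (a,b,c)" by (cases v) auto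
    have h: "homogeneous i a" "homogeneous i b" "homogeneous i c" using v vabc by (auto simp: S3_def homogeneous3_def)
    have hX: "homogeneous (N-1) XX" "homogeneous (N-1) YY" "homogeneous (N-1) ZZ"
      by (simp_all add: XX_def YY_def ZZ_def homogeneous_mon)
    show "p \<in> S_deg (i + (N-1))" unfolding v Psi_def vabc fst_conv snd_conv S_deg_def mem_Collect_eq
      using homogeneous_mult[OF h(1) hX(1)] homogeneous_mult[OF h(2) hX(2)] homogeneous_mult[OF h(3) hX(3)]
      by (intro homogeneous_add)
  qed
  have sub: "vsp.subspace (Psi ` S3 i)" by (rule vp31.linear_subspace_image[OF lin_Psi S3_subspace])
  have "Bk (i + (N-1)) \<subseteq> Psi ` S3 i"
  proof
    fix x assume "x \<in> Bk (i + (N-1))"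
    then obtain a b c where x: "x = Poly_Mapping.single (a,b,c) 1" and d: "a + b + c = i + (N-1)"
      by (auto simp: Bk_def mset3_def mono_deg_def)
    have "N - 1 \<le> a \<or> N - 1 \<le> b \<or> N - 1 \<le> c" using d i by linarith
    then show "x \<in> Psi ` S3 i"
    proof (elim disjE)
      assume a: "N - 1 \<le> a"
      let ?v = "(Poly_Mapping.single (a - (N-1), b, c) 1, 0::mpoly3, 0::mpoly3)"
      have "Psi ?v = x" using a by (simp add: Psi_def XX_def x mon_def mult_single)
      moreover have "?v \<in> S3 i" using a d by (simp add: S3_def homogeneous3_def homogeneous_single mono_deg_def)
      ultimately show ?thesis by blast
    next
      assume b: "N - 1 \<le> b"
      let ?v = "(0::mpoly3, Poly_Mapping.single (a, b - (N-1), c) 1, 0::mpoly3)"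
      have "Psi ?v = x" using b by (simp add: Psi_def YY_def x mon_def mult_single)
      moreover have "?v \<in> S3 i" using b d by (simp add: S3_def homogeneous3_def homogeneous_single mono_deg_def)
      ultimately show ?thesis by blast
    next
      assume c: "N - 1 \<le> c"
      let ?v = "(0::mpoly3, 0::mpoly3, Poly_Mapping.single (a, b, c - (N-1)) 1)"
      have "Psi ?v = x" using c by (simp add: Psi_def ZZ_def x mon_def mult_single)
      moreover have "?v \<in> S3 i" using c d by (simp add: S3_def homogeneous3_def homogeneous_single mono_deg_def)
      ultimately show ?thesis by blast
    qed
  qed
  then show "S_deg (i + (N-1)) \<subseteq> Psi ` S3 i"
    unfolding S_deg_span using vsp.span_minimal[OF _ sub] by blast
qed

end


context fc
begin

lemma hilb:
  assumes j: "j \<ge> 2 * N - 3"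
  shows "hilbert_quot (jacobian_ideal ff) (j + (N+1)) = 3 * N"
proof -
  define i where "i = j - 1"
  have ji: "j = i + 1" using j N3 unfolding i_def by linarith
  have i4: "i + 4 \<ge> 2 * N" using j ji N3 by linarith
  define J where "J = jacobian_ideal ff"
  define Kp where "Kp = {v \<in> S3 i. Psi v = 0}"
  have RN1: "vsp.dim (J \<inter> S_deg (j + (N+1))) + vsp3.dim (D0 ff \<inter> S3 j) = vsp3.dim (S3 j)"
    using vp31.rank_nullity[OF lin_Phi finite_B3[of j]]
    unfolding S3_span[symmetric] Phi_image Phi_kernel J_def .
  have RN2: "vsp.dim (S_deg (i + (N-1))) + vsp3.dim Kp = vsp3.dim (S3 i)"
    using vp31.rank_nullity[OF lin_Psi finite_B3[of i]]
    unfolding S3_span[symmetric] Psi_image[OF i4] Kp_def .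
  have INJ: "vsp3.dim (D0 ff \<inter> S3 j) = vsp3.dim Kp"
    using vp33.dim_image_inj[OF lin_rho rho_inj, of Kp] unfolding Kp_def rho_image ji .
  have "hilbert_quot J (j + (N+1)) = card (mset3 (j + (N+1))) - vsp.dim (J \<inter> S_deg (j + (N+1)))"
    by (simp add: hilbert_quot_def dim_S_deg)
  also have "\<dots> = 3 * N"
  proof (rule hilb_arith)
    show "2 * card (mset3 (j + (N+1))) = (i + N + 2 + 1) * (i + N + 2 + 2)"
      using card_monos[of "j + (N+1)"] ji by (simp add: algebra_simps)
    show "2 * card (mset3 j) = (i + 1 + 1) * (i + 1 + 2)" using card_monos[of j] ji by simp
    show "2 * card (mset3 i) = (i + 1) * (i + 2)" using card_monos[of i] by simp
    show "2 * card (mset3 (i + (N-1))) = (i + (N - 1) + 1) * (i + (N - 1) + 2)" using card_monos by simp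
    show "vsp.dim (J \<inter> S_deg (j + (N+1))) + vsp3.dim (D0 ff \<inter> S3 j) = 3 * card (mset3 j)"
      using RN1 dim_S3 by simp
    show "card (mset3 (i + (N-1))) + vsp3.dim (D0 ff \<inter> S3 j) = 3 * card (mset3 i)"
      using RN2 INJ dim_S3 dim_S_deg by simp
    show "N \<ge> 1" using N3 by simp
  qed
  finally show ?thesis unfolding J_def .
qed

lemma tjurina: "total_tjurina ff = 3 * N"
  unfolding total_tjurina_def
proof (rule the_equality)
  have "\<forall>k \<ge> (2 * N - 3) + (N + 1). hilbert_quot (jacobian_ideal ff) k = 3 * N"
  proof (intro allI impI)
    fix k assume k: "k \<ge> (2 * N - 3) + (N + 1)"
    then have "k = (k - (N+1)) + (N+1)" by simp
    moreover have "k - (N+1) \<ge> 2 * N - 3" using k by simp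
    ultimately show "hilbert_quot (jacobian_ideal ff) k = 3 * N" using hilb by metis
  qed
  then show "\<forall>\<^sub>F k in sequentially. hilbert_quot (jacobian_ideal ff) k = 3 * N"
    unfolding eventually_sequentially by blast
  fix t assume "\<forall>\<^sub>F k in sequentially. hilbert_quot (jacobian_ideal ff) k = t"
  moreover have "\<forall>\<^sub>F k in sequentially. hilbert_quot (jacobian_ideal ff) k = 3 * N"
    using \<open>\<forall>k \<ge> (2 * N - 3) + (N + 1). _\<close> unfolding eventually_sequentially by blast
  ultimately have "\<forall>\<^sub>F k in sequentially. t = 3 * N" by (rule eventually_elim2) auto
  then show "t = 3 * N" by simp
qed

end

theorem proposition4p2:
  fixes d :: nat
  assumes "d \<ge> 5"
  shows "curve_type (fermat_xyz d) d (d - 2) 3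
       \<and> (2 * (int d - 2) - int d + 3) - 3 = int d - 4
       \<and> total_tjurina (fermat_xyz d) = 3 * (d - 2)"
proof -
  interpret fc "d - 2" by unfold_locales (use assms in simp)
  have f: "fermat_xyz d = ff" using fermat_expand[of d] assms by (simp add: ff_def)
  have "curve_type ff (d - 2 + 2) (d - 2) 3" by (rule curve_type_ff)
  moreover have "d - 2 + 2 = d" using assms by simp
  ultimately have "curve_type (fermat_xyz d) d (d - 2) 3" using f by simp
  moreover have "(2 * (int d - 2) - int d + 3) - 3 = int d - 4" by simp
  moreover have "total_tjurina (fermat_xyz d) = 3 * (d - 2)" using tjurina f by simp
  ultimately show ?thesis by blast
qed


end
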